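(* Assume the Composite Assumption (see context), let $\lambda>0$ and $r>\rho_\lambda$. Then for all $x\in\mathcal X$ and $y\in\mathcal Y$, $$\mathrm{dist}\big(0,\partial^\delta_x(F(x,y)+\iota_{\mathcal X}(x))\big)^2\le\|\nabla_zd^\lambda_r(y,x)\|^2,$$ $$\mathrm{dist}\big(0,-\nabla_yF(x,y)+\mathcal N_{\mathcal Y}(y)\big)^2\le2\,\mathrm{dist}\big(0,-\nabla_yF^\lambda(x,y)+\mathcal N_{\mathcal Y}(y)\big)^2+\frac{\lambda^2d_hL_\varphi^2\ell_h^4}2,$$ where $\nabla_zd^\lambda_r(y,x)$ is the gradient of $z\mapsto d^\lambda_r(y,z)$ at $z=x$, and $$\delta=\frac{\rho_\lambda D_{\mathcal X}}r\|\nabla_zd^\lambda_r(y,x)\|+\frac{\ell_\varphi\ell_h\ell_c\sqrt{d_h}}r\|\nabla_zd^\lambda_r(y,x)\|+\Big(\frac{\rho_\lambda}{2r^2}+\frac1r\Big)\|\nabla_zd^\lambda_r(y,x)\|^2+\lambda\ell_\varphi\ell_h^2\sqrt{d_h}.$$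
   Context: Let $\mathcal X\subseteq\mathbb R^{d_x}$, $\mathcal Y\subseteq\mathbb R^{d_y}$ be nonempty closed convex sets and $\mathbb P$ a distribution with support $\Xi$. Let $f(x,y;\xi)=\varphi(h(c(x;\xi)),y;\xi)$ with $\varphi:\mathbb R^{d_h}\times\mathbb R^{d_y}\times\Xi\to\mathbb R$, $h=(h_1,\dots,h_{d_h}):\mathbb R^{d_c}\to\mathbb R^{d_h}$, $c:\mathbb R^{d_x}\times\Xi\to\mathbb R^{d_c}$, with $\varphi$ and $c$ differentiable, and $F(x,y)=\mathbb E_{\xi\sim\mathbb P}[f(x,y;\xi)]$. Composite Assumption: (i) $\mathcal X$ compact with diameter $D_{\mathcal X}$; (ii) $\mathcal Y$ compact with diameter $D_{\mathcal Y}$; (iii) each $c(\cdot;\xi)$ is $\ell_c$-Lipschitz; (iv) each $h_j$ is convex and $\ell_h$-Lipschitz; (v) each $\varphi(\cdot,\cdot;\xi)$ is nondecreasing in its first argument and $\ell_\varphi$-Lipschitz; (vi) $\mathbb E\|\nabla_xc(x_1;\xi)-\nabla_xc(x_2;\xi)\|^2\le L_c^2\|x_1-x_2\|^2$; (vii) for all $u_i,y_i,\xi$: $\|\nabla_1\varphi(u_1,y_1;\xi)-\nabla_1\varphi(u_2,y_2;\xi)\|^2\le L_\varphi^2(\|u_1-u_2\|^2+\|y_1-y_2\|^2)$ and the same for $\nabla_y\varphi$. Smoothing: $h^\lambda_j(w)=\min_q\{h_j(q)+\frac1{2\lambda}\|w-q\|^2\}$, $h^\lambda=(h^\lambda_j)_j$,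 $F^\lambda(x,y)=\mathbb E_{\xi\sim\mathbb P}[\varphi(h^\lambda(c(x;\xi)),y;\xi)]$, $F^\lambda_r(x,y,z)=F^\lambda(x,y)+\frac r2\|x-z\|^2$, $d^\lambda_r(y,z)=\min_{x\in\mathcal X}F^\lambda_r(x,y,z)$. Let $\rho_\lambda=d_hL_\varphi\ell_h^2\ell_c^2+L_c\ell_\varphi\ell_h\sqrt{d_h}$ (the weak convexity modulus of $F(\cdot,y)$ and $F^\lambda(\cdot,y)$). $\iota_{\mathcal X}$ is the $0$–$\infty$ indicator of $\mathcal X$, $\mathcal N_{\mathcal Y}$ the normal cone, and for a function $\Psi$ of $x$, $\partial^\delta\Psi(x)=\{v:\Psi(x')\ge\Psi(x)+v^\top(x'-x)-\frac{\rho_\lambda}2\|x'-x\|^2-\delta\ \ \forall x'\}$. *)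

theory Defs
  imports "HOL-Analysis.Analysis" "HOL-Probability.Probability"
begin

text \<open>Gradient of a real-valued function on a Euclidean space (Riesz representative of
  the Frechet derivative); meaningful when the function is differentiable at the point.\<close>
definition grad :: "('a::euclidean_space \<Rightarrow> real) \<Rightarrow> 'a \<Rightarrow> 'a" where
  "grad f x = (SOME g. (f has_derivative (\<lambda>v. inner g v)) (at x))"

definition iota :: "'a set \<Rightarrow> 'a \<Rightarrow> ereal" where
  "iota S x = (if x \<in> S then 0 else \<infinity>)"

definition normal_cone :: "'a::real_inner set \<Rightarrow> 'a \<Rightarrow> 'a set" where
  "normal_cone Y y = {g. \<forall>y'\<in>Y. inner g (y' - y) \<le> 0}"

definition wsubdiff :: "real \<Rightarrow> real \<Rightarrow> ('a::real_inner \<Rightarrow> ereal) \<Rightarrow> 'a \<Rightarrow> 'a set" where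
  "wsubdiff rho delta Psi x =
     {v. \<forall>x'. Psi x' \<ge> Psi x + ereal (inner v (x' - x) - rho / 2 * (norm (x' - x))\<^sup>2 - delta)}"

definition moreau :: "real \<Rightarrow> ('c::real_normed_vector \<Rightarrow> real) \<Rightarrow> 'c \<Rightarrow> real" where
  "moreau lam g w = Inf ((\<lambda>q. g q + 1 / (2 * lam) * (norm (w - q))\<^sup>2) ` UNIV)"

definition hvec :: "('h::finite \<Rightarrow> 'c \<Rightarrow> real) \<Rightarrow> 'c \<Rightarrow> real ^ 'h" where
  "hvec h w = (\<chi> j. h j w)"

definition hlam :: "real \<Rightarrow> ('h::finite \<Rightarrow> 'c::real_normed_vector \<Rightarrow> real) \<Rightarrow> 'c \<Rightarrow> real ^ 'h" where
  "hlam lam h w = (\<chi> j. moreau lam (h j) w)"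

definition Fobj :: "'xi measure \<Rightarrow> (real^'h \<Rightarrow> 'y \<Rightarrow> 'xi \<Rightarrow> real) \<Rightarrow> ('h::finite \<Rightarrow> 'c \<Rightarrow> real)
    \<Rightarrow> ('x \<Rightarrow> 'xi \<Rightarrow> 'c) \<Rightarrow> 'x \<Rightarrow> 'y \<Rightarrow> real" where
  "Fobj M phi h c x y = (\<integral>\<xi>. phi (hvec h (c x \<xi>)) y \<xi> \<partial>M)"

definition Flam :: "'xi measure \<Rightarrow> real \<Rightarrow> (real^'h \<Rightarrow> 'y \<Rightarrow> 'xi \<Rightarrow> real) \<Rightarrow> ('h::finite \<Rightarrow> 'c::real_normed_vector \<Rightarrow> real)
    \<Rightarrow> ('x \<Rightarrow> 'xi \<Rightarrow> 'c) \<Rightarrow> 'x \<Rightarrow> 'y \<Rightarrow> real" where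
  "Flam M lam phi h c x y = (\<integral>\<xi>. phi (hlam lam h (c x \<xi>)) y \<xi> \<partial>M)"

definition dlam :: "'xi measure \<Rightarrow> real \<Rightarrow> real \<Rightarrow> 'x::real_normed_vector set \<Rightarrow> (real^'h \<Rightarrow> 'y \<Rightarrow> 'xi \<Rightarrow> real)
    \<Rightarrow> ('h::finite \<Rightarrow> 'c::real_normed_vector \<Rightarrow> real) \<Rightarrow> ('x \<Rightarrow> 'xi \<Rightarrow> 'c) \<Rightarrow> 'y \<Rightarrow> 'x \<Rightarrow> real" where
  "dlam M lam r X phi h c y z = Inf ((\<lambda>x. Flam M lam phi h c x y + r / 2 * (norm (x - z))\<^sup>2) ` X)"

end

theory Submission
  imports Defs
begin



lemma grad_works:
  fixes f :: "'a::euclidean_space \<Rightarrow> real"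
  assumes "f differentiable (at x)"
  shows "(f has_derivative (\<lambda>v. inner (grad f x) v)) (at x)"
proof -
  from assms obtain D where D: "(f has_derivative D) (at x)" unfolding differentiable_def by blast
  then have lin: "linear D" using has_derivative_linear by blast
  define g where "g = (\<Sum>b\<in>Basis. D b *\<^sub>R b)"
  have "D = (\<lambda>v. inner g v)"
  proof
    fix v
    have "D v = D (\<Sum>b\<in>Basis. (v \<bullet> b) *\<^sub>R b)" by (simp add: euclidean_representation)
    also have "\<dots> = (\<Sum>b\<in>Basis. (v \<bullet> b) * D b)" by (simp add: linear_sum[OF lin] linear_scale[OF lin])
    also have "\<dots> = inner g v" by (simp add: g_def inner_sum_right inner_commute mult.commute)
    finally show "D v = inner g v" .
  qed
  then have "\<exists>g. (f has_derivative (\<lambda>v. inner g v)) (at x)" using D by auto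
  then show ?thesis unfolding grad_def by (rule someI_ex)
qed

lemma grad_unique:
  fixes f :: "'a::euclidean_space \<Rightarrow> real"
  assumes "(f has_derivative (\<lambda>v. inner g v)) (at x)"
  shows "grad f x = g"
proof -
  have "f differentiable (at x)" using assms unfolding differentiable_def by blast
  from has_derivative_unique[OF grad_works[OF this] assms]
  have "(\<lambda>v. inner (grad f x) v) = (\<lambda>v. inner g v)" .
  then have "inner (grad f x) (grad f x - g) = inner g (grad f x - g)" by metis
  then have "inner (grad f x - g) (grad f x - g) = 0" by (simp add: inner_diff_left)
  then show ?thesis by simp
qed



lemma line_deriv:
  fixes f :: "'a::euclidean_space \<Rightarrow> real"
  assumes "(f has_derivative (\<lambda>v. inner g v)) (at (a + s *\<^sub>R d))"
  shows "((\<lambda>s. f (a + s *\<^sub>R d)) has_real_derivative inner g d) (at s)"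
proof -
  have l: "((\<lambda>s. a + s *\<^sub>R d) has_derivative (\<lambda>t. t *\<^sub>R d)) (at s)"
    by (auto intro!: derivative_eq_intros)
  have "((\<lambda>s. f (a + s *\<^sub>R d)) has_derivative (\<lambda>t. inner g (t *\<^sub>R d))) (at s)"
    using has_derivative_compose[OF l assms] by (simp add: o_def)
  moreover have "(\<lambda>t. inner g (t *\<^sub>R d)) = (*) (inner g d)" by (auto simp: mult.commute)
  ultimately show ?thesis unfolding has_field_derivative_def by simp
qed

lemma descent:
  fixes f :: "'a::euclidean_space \<Rightarrow> real" and G :: "'a \<Rightarrow> 'a"
  assumes d: "\<And>z. (f has_derivative (\<lambda>v. inner (G z) v)) (at z)"
  and L: "\<And>a b. norm (G a - G b) \<le> L * norm (a - b)"
  shows "\<bar>f b - f a - inner (G a) (b - a)\<bar> \<le> L/2 * (norm (b - a))\<^sup>2"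
proof -
  define dd where "dd = b - a"
  have der: "((\<lambda>s. f (a + s *\<^sub>R dd)) has_real_derivative inner (G (a + s *\<^sub>R dd)) dd) (at s)" for s
    by (rule line_deriv[OF d])
  have bnd: "\<bar>inner (G (a + s *\<^sub>R dd)) dd - inner (G a) dd\<bar> \<le> L * s * (norm dd)\<^sup>2" if "0 \<le> s" for s
  proof -
    have "\<bar>inner (G (a + s *\<^sub>R dd)) dd - inner (G a) dd\<bar> = \<bar>inner (G (a + s *\<^sub>R dd) - G a) dd\<bar>"
      by (simp add: inner_diff_left)
    also have "\<dots> \<le> norm (G (a + s *\<^sub>R dd) - G a) * norm dd" by (rule Cauchy_Schwarz_ineq2)
    also have "\<dots> \<le> (L * norm (s *\<^sub>R dd)) * norm dd"
      using L[of "a + s *\<^sub>R dd" a] by (intro mult_right_mono) auto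
    also have "\<dots> = L * s * (norm dd)\<^sup>2" using that by (simp add: power2_eq_square)
    finally show ?thesis .
  qed
  define p1 where "p1 s = f (a + s *\<^sub>R dd) - s * inner (G a) dd - L/2 * s\<^sup>2 * (norm dd)\<^sup>2" for s
  define p2 where "p2 s = f (a + s *\<^sub>R dd) - s * inner (G a) dd + L/2 * s\<^sup>2 * (norm dd)\<^sup>2" for s
  have dp1: "(p1 has_real_derivative (inner (G (a + s *\<^sub>R dd)) dd - inner (G a) dd - L * s * (norm dd)\<^sup>2)) (at s)" for s
    unfolding p1_def by (auto intro!: derivative_eq_intros der simp: power2_eq_square)
  have dp2: "(p2 has_real_derivative (inner (G (a + s *\<^sub>R dd)) dd - inner (G a) dd + L * s * (norm dd)\<^sup>2)) (at s)" for s
    unfolding p2_def by (auto intro!: derivative_eq_intros der simp: power2_eq_square)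
  have "p1 1 \<le> p1 0"
  proof (rule DERIV_nonpos_imp_nonincreasing[of 0 1])
    fix s :: real assume "0 \<le> s" "s \<le> 1"
    then show "\<exists>y. (p1 has_real_derivative y) (at s) \<and> y \<le> 0"
      using dp1[of s] bnd[of s] by (intro exI[of _ "inner (G (a + s *\<^sub>R dd)) dd - inner (G a) dd - L * s * (norm dd)\<^sup>2"]) (simp add: abs_le_iff)
  qed simp
  moreover have "p2 0 \<le> p2 1"
  proof (rule DERIV_nonneg_imp_nondecreasing[of 0 1])
    fix s :: real assume "0 \<le> s" "s \<le> 1"
    then show "\<exists>y. (p2 has_real_derivative y) (at s) \<and> y \<ge> 0"
      using dp2[of s] bnd[of s] by (intro exI[of _ "inner (G (a + s *\<^sub>R dd)) dd - inner (G a) dd + L * s * (norm dd)\<^sup>2"]) (simp add: abs_le_iff)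
  qed simp
  ultimately have "f b - f a - inner (G a) (b - a) \<le> L/2 * (norm (b - a))\<^sup>2"
     "-(f b - f a - inner (G a) (b - a)) \<le> L/2 * (norm (b - a))\<^sup>2"
    unfolding p1_def p2_def dd_def by (simp_all add: algebra_simps inner_diff_right)
  then show ?thesis by linarith
qed



lemma quad_has_derivative:
  fixes f :: "'a::euclidean_space \<Rightarrow> real"
  assumes b: "\<And>k. \<bar>f (z + k) - f z - inner g k\<bar> \<le> C * (norm k)\<^sup>2"
  shows "(f has_derivative (\<lambda>k. inner g k)) (at z)"
  unfolding has_derivative_at'
proof (intro conjI allI impI)
  show "bounded_linear (\<lambda>k. inner g k)" by (rule bounded_linear_inner_right)
  fix e :: real assume e: "0 < e"
  define dl where "dl = e / (\<bar>C\<bar> + 1)"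
  have dl: "0 < dl" using e by (simp add: dl_def)
  show "\<exists>d>0. \<forall>x'. 0 < norm (x' - z) \<and> norm (x' - z) < d \<longrightarrow>
        norm (f x' - f z - inner g (x' - z)) / norm (x' - z) < e"
  proof (intro exI[of _ dl] conjI allI impI dl)
    fix x' assume a: "0 < norm (x' - z) \<and> norm (x' - z) < dl"
    have "norm (f x' - f z - inner g (x' - z)) \<le> C * (norm (x' - z))\<^sup>2"
      using b[of "x' - z"] by simp
    also have "\<dots> \<le> \<bar>C\<bar> * (norm (x' - z))\<^sup>2" by (intro mult_right_mono) auto
    finally have "norm (f x' - f z - inner g (x' - z)) / norm (x' - z) \<le> \<bar>C\<bar> * norm (x' - z)"
      using a by (simp add: divide_le_eq power2_eq_square mult.assoc)
    also have "\<dots> \<le> \<bar>C\<bar> * dl" using a by (intro mult_left_mono) auto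
    also have "\<dots> < e" using e by (simp add: dl_def field_simps)
    finally show "norm (f x' - f z - inner g (x' - z)) / norm (x' - z) < e" .
  qed
qed

lemma quad_id:
  fixes u v :: "'a::real_inner"
  shows "(1-t)*(norm u)\<^sup>2 + t*(norm v)\<^sup>2 - (norm ((1-t) *\<^sub>R u + t *\<^sub>R v))\<^sup>2 = t*(1-t)*(norm (u-v))\<^sup>2"
  by (simp add: power2_norm_eq_inner inner_add_left inner_add_right inner_diff_left inner_diff_right
      inner_commute algebra_simps)

lemma vec_norm_bound:
  fixes x :: "real^'n"
  assumes "\<And>j. \<bar>x $ j\<bar> \<le> K"
  shows "norm x \<le> sqrt (real CARD('n)) * K"
proof -
  have K: "0 \<le> K" using assms[of undefined] by linarith
  have "norm x = sqrt (\<Sum>j\<in>UNIV. (x $ j)\<^sup>2)" by (simp add: norm_vec_def L2_set_def)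
  also have "\<dots> \<le> sqrt (\<Sum>j\<in>(UNIV::'n set). K\<^sup>2)"
    using assms by (intro real_sqrt_le_mono sum_mono) (metis abs_le_square_iff abs_of_nonneg K)
  also have "\<dots> = sqrt (real CARD('n)) * K" using K by (simp add: real_sqrt_mult)
  finally show ?thesis .
qed

lemma moreau_lower:
  fixes g :: "'c::real_normed_vector \<Rightarrow> real"
  assumes lip: "L-lipschitz_on UNIV g" and lam: "0 < lam"
  shows "g w - lam * L\<^sup>2 / 2 \<le> g q + 1 / (2 * lam) * (norm (w - q))\<^sup>2"
proof -
  have L: "0 \<le> L" using lip lipschitz_on_nonneg by blast
  have "g w - g q \<le> L * norm (w - q)"
    using lipschitz_onD[OF lip, of w q] by (simp add: dist_norm)
  moreover have "L * norm (w - q) \<le> lam * L\<^sup>2 / 2 + 1 / (2 * lam) * (norm (w - q))\<^sup>2"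
  proof -
    have "0 \<le> (norm (w - q) - lam * L)\<^sup>2" by simp
    then have "2 * lam * (L * norm (w - q)) \<le> lam\<^sup>2 * L\<^sup>2 + (norm (w - q))\<^sup>2"
      by (simp add: power2_eq_square algebra_simps)
    then show ?thesis using lam by (simp add: field_simps power2_eq_square)
  qed
  ultimately show ?thesis by linarith
qed

lemma moreau_bdd:
  fixes g :: "'c::real_normed_vector \<Rightarrow> real"
  assumes lip: "L-lipschitz_on UNIV g" and lam: "0 < lam"
  shows "bdd_below ((\<lambda>q. g q + 1 / (2 * lam) * (norm (w - q))\<^sup>2) ` UNIV)"
  using moreau_lower[OF assms] by (intro bdd_belowI2) blast

lemma moreau_le:
  fixes g :: "'c::real_normed_vector \<Rightarrow> real"
  assumes lip: "L-lipschitz_on UNIV g" and lam: "0 < lam"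
  shows "moreau lam g w \<le> g q + 1 / (2 * lam) * (norm (w - q))\<^sup>2"
  unfolding moreau_def by (rule cInf_lower[OF _ moreau_bdd[OF assms]]) auto

lemma moreau_le_self:
  fixes g :: "'c::real_normed_vector \<Rightarrow> real"
  assumes lip: "L-lipschitz_on UNIV g" and lam: "0 < lam"
  shows "moreau lam g w \<le> g w"
  using moreau_le[OF assms, of w w] by simp

lemma moreau_ge:
  fixes g :: "'c::real_normed_vector \<Rightarrow> real"
  assumes lip: "L-lipschitz_on UNIV g" and lam: "0 < lam"
  shows "g w - lam * L\<^sup>2 / 2 \<le> moreau lam g w"
  unfolding moreau_def by (rule cInf_greatest) (use moreau_lower[OF assms] in auto)

lemma moreau_greatest:
  fixes g :: "'c::real_normed_vector \<Rightarrow> real"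
  assumes "\<And>q. m \<le> g q + 1 / (2 * lam) * (norm (w - q))\<^sup>2"
  shows "m \<le> moreau lam g w"
  unfolding moreau_def by (rule cInf_greatest) (use assms in auto)

lemma moreau_lip:
  fixes g :: "'c::real_normed_vector \<Rightarrow> real"
  assumes lip: "L-lipschitz_on UNIV g" and lam: "0 < lam"
  shows "L-lipschitz_on UNIV (moreau lam g)"
proof -
  have L: "0 \<le> L" using lip lipschitz_on_nonneg by blast
  have one: "moreau lam g w' \<le> moreau lam g w + L * norm (w' - w)" for w w'
  proof -
    have "moreau lam g w' - L * norm (w' - w) \<le> moreau lam g w"
    proof (rule moreau_greatest)
      fix q
      have "moreau lam g w' \<le> g (q + (w' - w)) + 1 / (2 * lam) * (norm (w' - (q + (w' - w))))\<^sup>2"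
        by (rule moreau_le[OF assms])
      also have "g (q + (w' - w)) \<le> g q + L * norm (w' - w)"
        using lipschitz_onD[OF lip, of "q + (w' - w)" q] by (simp add: dist_norm)
      finally show "moreau lam g w' - L * norm (w' - w) \<le> g q + 1 / (2 * lam) * (norm (w - q))\<^sup>2"
        by (simp add: algebra_simps)
    qed
    then show ?thesis by simp
  qed
  show ?thesis
  proof (rule lipschitz_onI)
    fix a b :: 'c
    show "dist (moreau lam g a) (moreau lam g b) \<le> L * dist a b"
      using one[of b a] one[of a b] by (simp add: dist_norm norm_minus_commute abs_le_iff)
  qed (rule L)
qed

lemma moreau_convex:
  fixes g :: "'c::real_inner \<Rightarrow> real"
  assumes lip: "L-lipschitz_on UNIV g" and lam: "0 < lam" and cv: "convex_on UNIV g"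
  shows "convex_on UNIV (moreau lam g)"
proof (rule convex_onI)
  fix t :: real and a b :: 'c
  assume t: "0 < t" "t < 1"
  let ?m = "moreau lam g ((1 - t) *\<^sub>R a + t *\<^sub>R b)"
  let ?A = "\<lambda>q. g q + 1 / (2 * lam) * (norm (a - q))\<^sup>2"
  let ?B = "\<lambda>q. g q + 1 / (2 * lam) * (norm (b - q))\<^sup>2"
  have key: "?m \<le> (1 - t) * ?A qa + t * ?B qb" for qa qb
  proof -
    have "?m \<le> g ((1 - t) *\<^sub>R qa + t *\<^sub>R qb) + 1 / (2 * lam) * (norm (((1 - t) *\<^sub>R a + t *\<^sub>R b) - ((1 - t) *\<^sub>R qa + t *\<^sub>R qb)))\<^sup>2"
      by (rule moreau_le[OF lip lam])
    also have "g ((1 - t) *\<^sub>R qa + t *\<^sub>R qb) \<le> (1 - t) * g qa + t * g qb"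
      using convex_onD[OF cv, of t qa qb] t by simp
    also have "((1 - t) *\<^sub>R a + t *\<^sub>R b) - ((1 - t) *\<^sub>R qa + t *\<^sub>R qb) = (1 - t) *\<^sub>R (a - qa) + t *\<^sub>R (b - qb)"
      by (simp add: algebra_simps)
    also have "(norm ((1 - t) *\<^sub>R (a - qa) + t *\<^sub>R (b - qb)))\<^sup>2 \<le> (1 - t) * (norm (a - qa))\<^sup>2 + t * (norm (b - qb))\<^sup>2"
      using quad_id[of t "a - qa" "b - qb"] t by (smt (verit) mult_nonneg_nonneg zero_le_power2)
    finally show ?thesis using lam t by (simp add: algebra_simps divide_simps)
  qed
  have "(?m - t * ?B qb) / (1 - t) \<le> moreau lam g a" for qb
    by (rule moreau_greatest) (use key t in \<open>simp add: divide_le_eq algebra_simps\<close>)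
  then have "(?m - (1 - t) * moreau lam g a) / t \<le> moreau lam g b"
    by (intro moreau_greatest) (use t in \<open>simp add: divide_le_eq le_divide_eq algebra_simps\<close>)
  then show "?m \<le> (1 - t) * moreau lam g a + t * moreau lam g b"
    using t by (simp add: divide_le_eq algebra_simps)
qed auto



lemma floor_div_tendsto:
  fixes v :: real
  shows "(\<lambda>n. real_of_int \<lfloor>real (Suc n) * v\<rfloor> / real (Suc n)) \<longlonglongrightarrow> v"
proof (rule tendsto_sandwich[of "\<lambda>n. v - inverse (real (Suc n))" _ _ "\<lambda>n. v"])
  show "\<forall>\<^sub>F n in sequentially. v - inverse (real (Suc n)) \<le> real_of_int \<lfloor>real (Suc n) * v\<rfloor> / real (Suc n)"
  proof (intro always_eventually allI)
    fix n
    have a: "real (Suc n) * v - 1 \<le> real_of_int \<lfloor>real (Suc n) * v\<rfloor>" by linarith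
    have s: "0 < real (Suc n)" by simp
    have "v - inverse (real (Suc n)) = (real (Suc n) * v - 1) / real (Suc n)" using s by (simp add: field_simps)
    then show "v - inverse (real (Suc n)) \<le> real_of_int \<lfloor>real (Suc n) * v\<rfloor> / real (Suc n)"
      using divide_right_mono[OF a less_imp_le[OF s]] by simp
  qed
  show "\<forall>\<^sub>F n in sequentially. real_of_int \<lfloor>real (Suc n) * v\<rfloor> / real (Suc n) \<le> v"
  proof (intro always_eventually allI)
    fix n
    have "real_of_int \<lfloor>real (Suc n) * v\<rfloor> \<le> real (Suc n) * v" by linarith
    then show "real_of_int \<lfloor>real (Suc n) * v\<rfloor> / real (Suc n) \<le> v"
      by (simp add: field_simps)
  qed
  show "(\<lambda>n. v - inverse (real (Suc n))) \<longlonglongrightarrow> v"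
    using tendsto_diff[OF tendsto_const LIMSEQ_inverse_real_of_nat, of v] by simp
qed simp

lemma caratheodory_meas:
  fixes phi :: "real^'h::finite \<Rightarrow> 'xi \<Rightarrow> real" and u :: "'xi \<Rightarrow> real^'h"
  assumes m: "\<And>v. (\<lambda>\<xi>. phi v \<xi>) \<in> borel_measurable M"
  and cont: "\<And>\<xi>. \<xi> \<in> space M \<Longrightarrow> continuous_on UNIV (\<lambda>v. phi v \<xi>)"
  and u: "u \<in> borel_measurable M"
  shows "(\<lambda>\<xi>. phi (u \<xi>) \<xi>) \<in> borel_measurable M"
proof -
  define R :: "nat \<Rightarrow> 'xi \<Rightarrow> 'h \<Rightarrow> int" where "R n \<xi> = (\<lambda>j. \<lfloor>real (Suc n) * u \<xi> $ j\<rfloor>)" for n \<xi>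
  define Q :: "nat \<Rightarrow> ('h \<Rightarrow> int) \<Rightarrow> real^'h" where "Q n a = (\<chi> j. real_of_int (a j) / real (Suc n))" for n a
  have Rm: "R n \<in> measurable M (count_space UNIV)" for n
  proof (subst measurable_count_space_eq2_countable, intro conjI ballI)
    show "R n \<in> space M \<rightarrow> UNIV" by simp
    fix a :: "'h \<Rightarrow> int"
    have "R n -` {a} \<inter> space M = {\<xi> \<in> space M. \<forall>j. real_of_int (a j) \<le> real (Suc n) * u \<xi> $ j \<and> real (Suc n) * u \<xi> $ j < real_of_int (a j) + 1}"
      unfolding R_def by (auto simp: fun_eq_iff floor_eq_iff)
    also have "\<dots> \<in> sets M" using u by measurable
    finally show "R n -` {a} \<inter> space M \<in> sets M" .
  qed
  have fm: "(\<lambda>\<xi>. phi (Q n (R n \<xi>)) \<xi>) \<in> borel_measurable M" for n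
    by (rule measurable_compose_countable[OF _ Rm]) (rule m)
  show ?thesis
  proof (rule borel_measurable_LIMSEQ_metric[OF fm])
    fix \<xi> assume \<xi>: "\<xi> \<in> space M"
    have "(\<lambda>n. Q n (R n \<xi>)) \<longlonglongrightarrow> u \<xi>"
      unfolding Q_def R_def by (intro vec_tendstoI) (simp only: vec_lambda_beta floor_div_tendsto)
    then show "(\<lambda>n. phi (Q n (R n \<xi>)) \<xi>) \<longlonglongrightarrow> phi (u \<xi>) \<xi>"
      by (rule continuous_on_tendsto_compose[OF cont[OF \<xi>]]) auto
  qed
qed



lemma deriv_seq:
  fixes f :: "'a::euclidean_space \<Rightarrow> 'b::real_normed_vector"
  assumes d: "(f has_derivative D) (at x)"
  shows "(\<lambda>n. real (Suc n) *\<^sub>R (f (x + inverse (real (Suc n)) *\<^sub>R v) - f x)) \<longlonglongrightarrow> D v"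
proof (cases "v = 0")
  case True
  have "linear D" using d has_derivative_linear by blast
  then have "D 0 = 0" by (rule linear_0)
  then show ?thesis using True by simp
next
  case False
  have bl: "bounded_linear D" using d has_derivative_bounded_linear by blast
  have lim: "(\<lambda>h. norm (f (x + h) - f x - D h) / norm h) \<midarrow>0\<rightarrow> 0"
    using d unfolding has_derivative_at by blast
  define X where "X n = inverse (real (Suc n)) *\<^sub>R v" for n
  have X0: "X \<longlonglongrightarrow> 0" unfolding X_def
    using tendsto_scaleR[OF LIMSEQ_inverse_real_of_nat tendsto_const[of v]] by simp
  have Xn: "\<forall>i. X i \<in> UNIV - {0}" using False by (simp add: X_def)
  have "((\<lambda>h. norm (f (x + h) - f x - D h) / norm h) \<circ> X) \<longlonglongrightarrow> 0"
    using lim unfolding tendsto_at_iff_sequentially using Xn X0 by blast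
  then have l2: "(\<lambda>n. norm v * (norm (f (x + X n) - f x - D (X n)) / norm (X n))) \<longlonglongrightarrow> 0"
    using tendsto_mult[OF tendsto_const[of "norm v"]] by (force simp: o_def)
  have eq: "norm v * (norm (f (x + X n) - f x - D (X n)) / norm (X n))
      = norm (real (Suc n) *\<^sub>R (f (x + inverse (real (Suc n)) *\<^sub>R v) - f x) - D v)" for n
  proof -
    have "D (X n) = inverse (real (Suc n)) *\<^sub>R D v" unfolding X_def by (simp add: linear_simps(5)[OF bl])
    then have e1: "real (Suc n) *\<^sub>R (f (x + X n) - f x) - D v = real (Suc n) *\<^sub>R (f (x + X n) - f x - D (X n))"
      by (simp add: scaleR_diff_right del: of_nat_Suc)
    have nX: "norm (X n) = norm v / real (Suc n)" by (simp add: X_def divide_inverse mult.commute)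
    have "norm v * (norm (f (x + X n) - f x - D (X n)) / norm (X n)) = real (Suc n) * norm (f (x + X n) - f x - D (X n))"
      using False by (simp add: nX field_simps del: of_nat_Suc)
    also have "\<dots> = norm (real (Suc n) *\<^sub>R (f (x + X n) - f x) - D v)" unfolding e1 by simp
    finally show ?thesis by (simp add: X_def)
  qed
  show ?thesis using l2 unfolding eq by (simp add: LIM_zero_iff tendsto_norm_zero_iff)
qed

lemma deriv_meas:
  fixes c :: "'x::euclidean_space \<Rightarrow> 'xi \<Rightarrow> 'c::euclidean_space"
  assumes m: "\<And>x. (\<lambda>\<xi>. c x \<xi>) \<in> borel_measurable M"
    and d: "\<And>\<xi>. \<xi> \<in> space M \<Longrightarrow> ((\<lambda>x. c x \<xi>) has_derivative D \<xi>) (at x0)"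
  shows "(\<lambda>\<xi>. D \<xi> v) \<in> borel_measurable M"
proof (rule borel_measurable_LIMSEQ_metric)
  show "(\<lambda>\<xi>. real (Suc n) *\<^sub>R (c (x0 + inverse (real (Suc n)) *\<^sub>R v) \<xi> - c x0 \<xi>)) \<in> borel_measurable M" for n
    using m by measurable
  show "\<xi> \<in> space M \<Longrightarrow> (\<lambda>n. real (Suc n) *\<^sub>R (c (x0 + inverse (real (Suc n)) *\<^sub>R v) \<xi> - c x0 \<xi>)) \<longlonglongrightarrow> D \<xi> v" for \<xi>
    by (rule deriv_seq[OF d])
qed



locale cset = prob_space M for M :: "'xi measure" +
  fixes c :: "'x::euclidean_space \<Rightarrow> 'xi \<Rightarrow> 'c::euclidean_space" and lc Lc :: real
  assumes c_meas: "\<And>x. (\<lambda>\<xi>. c x \<xi>) \<in> borel_measurable M"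
  and c_diff: "\<And>x \<xi>. \<xi> \<in> space M \<Longrightarrow> (\<lambda>x. c x \<xi>) differentiable (at x)"
  and c_lip: "\<And>\<xi>. \<xi> \<in> space M \<Longrightarrow> lc-lipschitz_on UNIV (\<lambda>x. c x \<xi>)"
  and Dc_lip: "\<And>x1 x2. (\<integral>\<^sup>+ \<xi>. ennreal ((onorm (\<lambda>v. frechet_derivative (\<lambda>x. c x \<xi>) (at x1) v
                                   - frechet_derivative (\<lambda>x. c x \<xi>) (at x2) v))\<^sup>2) \<partial>M)
                 \<le> ennreal (Lc\<^sup>2 * (norm (x1 - x2))\<^sup>2)"
  and Lc_nn: "0 \<le> Lc"
begin

definition J where "J x \<xi> = frechet_derivative (\<lambda>x. c x \<xi>) (at x)"

lemma J_has: "\<xi> \<in> space M \<Longrightarrow> ((\<lambda>x. c x \<xi>) has_derivative J x \<xi>) (at x)"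
  unfolding J_def using c_diff frechet_derivative_works by blast

lemma J_bl: "\<xi> \<in> space M \<Longrightarrow> bounded_linear (J x \<xi>)"
  using J_has has_derivative_bounded_linear by blast

lemma lc_nn: "0 \<le> lc"
proof -
  obtain \<xi> where "\<xi> \<in> space M" using not_empty by blast
  then show ?thesis using c_lip lipschitz_on_nonneg by blast
qed

lemma c_lipD: "\<xi> \<in> space M \<Longrightarrow> norm (c a \<xi> - c b \<xi>) \<le> lc * norm (a - b)"
  using lipschitz_onD[OF c_lip, of \<xi> a b] by (simp add: dist_norm)

lemma J_bound: assumes \<xi>: "\<xi> \<in> space M" shows "norm (J x \<xi> v) \<le> lc * norm v"
proof -
  have l: "(\<lambda>n. real (Suc n) *\<^sub>R (c (x + inverse (real (Suc n)) *\<^sub>R v) \<xi> - c x \<xi>)) \<longlonglongrightarrow> J x \<xi> v"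
    by (rule deriv_seq[OF J_has[OF \<xi>]])
  have "norm (real (Suc n) *\<^sub>R (c (x + inverse (real (Suc n)) *\<^sub>R v) \<xi> - c x \<xi>)) \<le> lc * norm v" for n
  proof -
    have "norm (real (Suc n) *\<^sub>R (c (x + inverse (real (Suc n)) *\<^sub>R v) \<xi> - c x \<xi>))
        = real (Suc n) * norm (c (x + inverse (real (Suc n)) *\<^sub>R v) \<xi> - c x \<xi>)" by simp
    also have "\<dots> \<le> real (Suc n) * (lc * norm (inverse (real (Suc n)) *\<^sub>R v))"
      using c_lipD[OF \<xi>, of "x + inverse (real (Suc n)) *\<^sub>R v" x] by (intro mult_left_mono) (auto simp del: of_nat_Suc)
    also have "\<dots> = lc * norm v" by (simp del: of_nat_Suc)
    finally show ?thesis .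
  qed
  then show ?thesis using LIMSEQ_le_const2[OF tendsto_norm[OF l]] by blast
qed

lemma J_meas: "(\<lambda>\<xi>. J x \<xi> v) \<in> borel_measurable M"
  by (rule deriv_meas[OF c_meas J_has])

lemma inner_sgn_self: "inner (sgn (e::'c)) e = norm e"
  by (cases "e = 0") (simp_all add: sgn_div_norm inner_commute power2_norm_eq_inner[symmetric] power2_eq_square)

lemma err_bound:
  fixes x0 dl :: 'x
  shows "integrable M (\<lambda>\<xi>. norm (c (x0 + dl) \<xi> - c x0 \<xi> - J x0 \<xi> dl))"
    and "(\<integral>\<xi>. norm (c (x0 + dl) \<xi> - c x0 \<xi> - J x0 \<xi> dl) \<partial>M) \<le> Lc / 2 * (norm dl)\<^sup>2"
proof -
  define e where "e \<xi> = c (x0 + dl) \<xi> - c x0 \<xi> - J x0 \<xi> dl" for \<xi>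
  have em: "e \<in> borel_measurable M" unfolding e_def using c_meas J_meas by measurable
  have eb: "norm (e \<xi>) \<le> 2 * lc * norm dl" if "\<xi> \<in> space M" for \<xi>
  proof -
    have "norm (e \<xi>) \<le> norm (c (x0 + dl) \<xi> - c x0 \<xi>) + norm (J x0 \<xi> dl)"
      unfolding e_def by (rule norm_triangle_ineq4)
    also have "\<dots> \<le> lc * norm dl + lc * norm dl"
      using c_lipD[OF that, of "x0 + dl" x0] J_bound[OF that] by (intro add_mono) auto
    finally show ?thesis by simp
  qed
  show ie: "integrable M (\<lambda>\<xi>. norm (c (x0 + dl) \<xi> - c x0 \<xi> - J x0 \<xi> dl))"
    using eb em unfolding e_def[symmetric]
    by (intro integrable_const_bound[where B="2 * lc * norm dl"]) auto
  define w where "w \<xi> = sgn (e \<xi>)" for \<xi>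
  have wm: "w \<in> borel_measurable M" unfolding w_def using em by measurable
  have wn: "norm (w \<xi>) \<le> 1" for \<xi> unfolding w_def by (simp add: norm_sgn)
  define G where "G t \<xi> = inner (w \<xi>) (c (x0 + t *\<^sub>R dl) \<xi> - c x0 \<xi>)" for t \<xi>
  define A where "A t \<xi> = inner (w \<xi>) (J (x0 + t *\<^sub>R dl) \<xi> dl)" for t \<xi>
  have Gm: "G t \<in> borel_measurable M" for t unfolding G_def using wm c_meas by measurable
  have Am: "A t \<in> borel_measurable M" for t unfolding A_def using wm J_meas by measurable
  have Gdiff: "\<bar>G a \<xi> - G b \<xi>\<bar> \<le> lc * \<bar>a - b\<bar> * norm dl" if \<xi>: "\<xi> \<in> space M" for a b \<xi>
  proof -
    have "\<bar>G a \<xi> - G b \<xi>\<bar> = \<bar>inner (w \<xi>) (c (x0 + a *\<^sub>R dl) \<xi> - c (x0 + b *\<^sub>R dl) \<xi>)\<bar>"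
      unfolding G_def by (simp add: inner_diff_right)
    also have "\<dots> \<le> norm (w \<xi>) * norm (c (x0 + a *\<^sub>R dl) \<xi> - c (x0 + b *\<^sub>R dl) \<xi>)"
      by (rule Cauchy_Schwarz_ineq2)
    also have "\<dots> \<le> 1 * (lc * norm ((x0 + a *\<^sub>R dl) - (x0 + b *\<^sub>R dl)))"
      using wn[of \<xi>] c_lipD[OF \<xi>, of "x0 + a *\<^sub>R dl" "x0 + b *\<^sub>R dl"] by (intro mult_mono) auto
    also have "(x0 + a *\<^sub>R dl) - (x0 + b *\<^sub>R dl) = (a - b) *\<^sub>R dl" by (simp add: algebra_simps)
    finally show ?thesis by simp
  qed
  have Gi: "integrable M (G t)" for t
    using Gdiff[of _ t 0] Gm by (intro integrable_const_bound[where B="lc * \<bar>t\<bar> * norm dl"]) (auto simp: G_def)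
  have Ab: "\<bar>A t \<xi>\<bar> \<le> lc * norm dl" if "\<xi> \<in> space M" for t \<xi>
  proof -
    have "\<bar>A t \<xi>\<bar> \<le> norm (w \<xi>) * norm (J (x0 + t *\<^sub>R dl) \<xi> dl)" unfolding A_def by (rule Cauchy_Schwarz_ineq2)
    also have "\<dots> \<le> 1 * (lc * norm dl)" using wn J_bound[OF that] by (intro mult_mono) auto
    finally show ?thesis by simp
  qed
  have Ai: "integrable M (A t)" for t
    using Ab Am by (intro integrable_const_bound[where B="lc * norm dl"]) auto
  have Gder: "((\<lambda>t. G t \<xi>) has_field_derivative A t \<xi>) (at t)" if \<xi>: "\<xi> \<in> space M" for t \<xi>
  proof -
    have l: "((\<lambda>s. x0 + s *\<^sub>R dl) has_derivative (\<lambda>h. h *\<^sub>R dl)) (at t)"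
      by (auto intro!: derivative_eq_intros)
    have "((\<lambda>s. c (x0 + s *\<^sub>R dl) \<xi>) has_derivative (\<lambda>h. J (x0 + t *\<^sub>R dl) \<xi> (h *\<^sub>R dl))) (at t)"
      using has_derivative_compose[OF l J_has[OF \<xi>]] by (simp add: o_def)
    then have "((\<lambda>s. inner (w \<xi>) (c (x0 + s *\<^sub>R dl) \<xi> - c x0 \<xi>)) has_derivative
        (\<lambda>h. inner (w \<xi>) (J (x0 + t *\<^sub>R dl) \<xi> (h *\<^sub>R dl) - 0))) (at t)"
      by (intro has_derivative_inner_right has_derivative_diff has_derivative_const)
    moreover have "(\<lambda>h. inner (w \<xi>) (J (x0 + t *\<^sub>R dl) \<xi> (h *\<^sub>R dl) - 0)) = (*) (A t \<xi>)"
      using linear_scale[OF bounded_linear.linear[OF J_bl[OF \<xi>]]]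
      by (auto simp: A_def mult.commute fun_eq_iff)
    ultimately show ?thesis unfolding has_field_derivative_def G_def by simp
  qed
  define psi where "psi t = (\<integral>\<xi>. G t \<xi> \<partial>M)" for t
  define a where "a t = (\<integral>\<xi>. A t \<xi> \<partial>M)" for t
  have psider: "(psi has_field_derivative a t) (at t)" for t
    unfolding has_field_derivative_iff tendsto_at_iff_sequentially
  proof (intro allI impI)
    fix X :: "nat \<Rightarrow> real" assume X: "\<forall>i. X i \<in> UNIV - {t}" "X \<longlonglongrightarrow> t"
    have eq: "((\<lambda>y. (psi y - psi t) / (y - t)) \<circ> X) = (\<lambda>i. \<integral>\<xi>. (G (X i) \<xi> - G t \<xi>) / (X i - t) \<partial>M)"
      by (simp add: o_def psi_def Gi)
    show "((\<lambda>y. (psi y - psi t) / (y - t)) \<circ> X) \<longlonglongrightarrow> a t"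
      unfolding eq a_def
    proof (rule integral_dominated_convergence[where w="\<lambda>_. lc * norm dl"])
      show "(\<lambda>\<xi>. (G (X i) \<xi> - G t \<xi>) / (X i - t)) \<in> borel_measurable M" for i using Gm by measurable
      show "A t \<in> borel_measurable M" by (rule Am)
      show "integrable M (\<lambda>_. lc * norm dl)" by simp
      show "AE \<xi> in M. (\<lambda>i. (G (X i) \<xi> - G t \<xi>) / (X i - t)) \<longlonglongrightarrow> A t \<xi>"
      proof (rule AE_I2)
        fix \<xi> assume \<xi>: "\<xi> \<in> space M"
        have "((\<lambda>y. (G y \<xi> - G t \<xi>) / (y - t)) \<longlongrightarrow> A t \<xi>) (at t)"
          using Gder[OF \<xi>, of t] unfolding has_field_derivative_iff .
        then show "(\<lambda>i. (G (X i) \<xi> - G t \<xi>) / (X i - t)) \<longlonglongrightarrow> A t \<xi>"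
          unfolding tendsto_at_iff_sequentially using X by (simp add: o_def)
      qed
      show "AE \<xi> in M. norm ((G (X i) \<xi> - G t \<xi>) / (X i - t)) \<le> lc * norm dl" for i
      proof (rule AE_I2)
        fix \<xi> assume \<xi>: "\<xi> \<in> space M"
        have ne: "X i - t \<noteq> 0" using X by auto
        show "norm ((G (X i) \<xi> - G t \<xi>) / (X i - t)) \<le> lc * norm dl"
          using Gdiff[OF \<xi>, of "X i" t] ne by (simp add: divide_le_eq abs_divide mult.commute mult.left_commute)
      qed
    qed
  qed
  have aB: "a t - a 0 \<le> Lc * t * (norm dl)\<^sup>2" if t: "0 \<le> t" for t
  proof (cases "dl = 0")
    case True then show ?thesis by (simp add: a_def A_def)
  next
    case False
    define f where "f \<xi> = \<bar>A t \<xi> - A 0 \<xi>\<bar> / norm dl" for \<xi>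
    have fm: "f \<in> borel_measurable M" unfolding f_def using Am by measurable
    have fb: "norm (f \<xi>) \<le> 2 * lc" if "\<xi> \<in> space M" for \<xi>
    proof -
      have "\<bar>A t \<xi> - A 0 \<xi>\<bar> \<le> 2 * lc * norm dl" using Ab[OF that, of t] Ab[OF that, of 0] by linarith
      then show ?thesis using False by (simp add: f_def divide_le_eq)
    qed
    have fi: "integrable M f" using fm fb by (intro integrable_const_bound[where B="2*lc"]) auto
    have f2i: "integrable M (\<lambda>\<xi>. (f \<xi>)\<^sup>2)"
    proof (rule integrable_const_bound[where B="(2*lc)\<^sup>2"])
      show "AE \<xi> in M. norm ((f \<xi>)\<^sup>2) \<le> (2*lc)\<^sup>2"
      proof (rule AE_I2)
        fix \<xi> assume "\<xi> \<in> space M"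
        then have "\<bar>f \<xi>\<bar> \<le> 2*lc" using fb by simp
        then have "\<bar>f \<xi>\<bar>\<^sup>2 \<le> (2*lc)\<^sup>2" by (intro power_mono) auto
        then show "norm ((f \<xi>)\<^sup>2) \<le> (2*lc)\<^sup>2" by simp
      qed
    qed (use fm in measurable)
    have fon: "(f \<xi>)\<^sup>2 \<le> (onorm (\<lambda>v. J (x0 + t *\<^sub>R dl) \<xi> v - J (x0 + 0 *\<^sub>R dl) \<xi> v))\<^sup>2"
      if \<xi>: "\<xi> \<in> space M" for \<xi>
    proof -
      have bl: "bounded_linear (\<lambda>v. J (x0 + t *\<^sub>R dl) \<xi> v - J (x0 + 0 *\<^sub>R dl) \<xi> v)"
        using J_bl[OF \<xi>] by (intro bounded_linear_sub)
      have "\<bar>A t \<xi> - A 0 \<xi>\<bar> = \<bar>inner (w \<xi>) (J (x0 + t *\<^sub>R dl) \<xi> dl - J (x0 + 0 *\<^sub>R dl) \<xi> dl)\<bar>"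
        unfolding A_def by (simp add: inner_diff_right)
      also have "\<dots> \<le> norm (w \<xi>) * norm (J (x0 + t *\<^sub>R dl) \<xi> dl - J (x0 + 0 *\<^sub>R dl) \<xi> dl)"
        by (rule Cauchy_Schwarz_ineq2)
      also have "\<dots> \<le> 1 * (onorm (\<lambda>v. J (x0 + t *\<^sub>R dl) \<xi> v - J (x0 + 0 *\<^sub>R dl) \<xi> v) * norm dl)"
        using wn onorm[OF bl, of dl] by (intro mult_mono) auto
      finally have "f \<xi> \<le> onorm (\<lambda>v. J (x0 + t *\<^sub>R dl) \<xi> v - J (x0 + 0 *\<^sub>R dl) \<xi> v)"
        using False by (simp add: f_def divide_le_eq)
      moreover have "0 \<le> f \<xi>" by (simp add: f_def)
      ultimately show ?thesis by (intro power_mono) auto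
    qed
    have "(\<integral>\<^sup>+ \<xi>. ennreal ((f \<xi>)\<^sup>2) \<partial>M) \<le> (\<integral>\<^sup>+ \<xi>. ennreal ((onorm (\<lambda>v. J (x0 + t *\<^sub>R dl) \<xi> v - J (x0 + 0 *\<^sub>R dl) \<xi> v))\<^sup>2) \<partial>M)"
      using fon by (intro nn_integral_mono) (simp add: ennreal_leI)
    also have "\<dots> \<le> ennreal (Lc\<^sup>2 * (norm ((x0 + t *\<^sub>R dl) - (x0 + 0 *\<^sub>R dl)))\<^sup>2)"
      using Dc_lip unfolding J_def .
    finally have "(\<integral>\<^sup>+ \<xi>. ennreal ((f \<xi>)\<^sup>2) \<partial>M) \<le> ennreal ((Lc * t * norm dl)\<^sup>2)"
      using t by (simp add: power_mult_distrib mult.assoc)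
    then have f2: "(\<integral>\<xi>. (f \<xi>)\<^sup>2 \<partial>M) \<le> (Lc * t * norm dl)\<^sup>2"
      using fm by (subst integral_eq_nn_integral) (auto intro: enn2real_leI)
    have "0 \<le> (\<integral>\<xi>. (f \<xi> - (\<integral>\<xi>. f \<xi> \<partial>M))\<^sup>2 \<partial>M)" by (rule variance_positive)
    also have "\<dots> = (\<integral>\<xi>. (f \<xi>)\<^sup>2 \<partial>M) - (\<integral>\<xi>. f \<xi> \<partial>M)\<^sup>2" by (rule variance_eq[OF fi f2i])
    finally have "(\<integral>\<xi>. f \<xi> \<partial>M)\<^sup>2 \<le> (Lc * t * norm dl)\<^sup>2" using f2 by linarith
    then have fI: "(\<integral>\<xi>. f \<xi> \<partial>M) \<le> \<bar>Lc * t * norm dl\<bar>" using abs_le_square_iff by (metis abs_ge_self order_trans)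
    have "a t - a 0 = (\<integral>\<xi>. A t \<xi> - A 0 \<xi> \<partial>M)" unfolding a_def using Ai by simp
    also have "\<dots> \<le> (\<integral>\<xi>. \<bar>A t \<xi> - A 0 \<xi>\<bar> \<partial>M)"
      using Ai by (intro integral_mono) auto
    also have "\<dots> = (\<integral>\<xi>. norm dl * f \<xi> \<partial>M)" using False by (simp add: f_def)
    also have "\<dots> = norm dl * (\<integral>\<xi>. f \<xi> \<partial>M)" by simp
    also have "\<dots> \<le> norm dl * \<bar>Lc * t * norm dl\<bar>" using fI by (intro mult_left_mono) auto
    also have "\<dots> \<le> Lc * t * (norm dl)\<^sup>2"
      using t Lc_nn by (simp add: power2_eq_square)
    finally show ?thesis .
  qed
  define p where "p s = psi s - s * a 0 - Lc / 2 * s\<^sup>2 * (norm dl)\<^sup>2" for s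
  have dp: "(p has_real_derivative (a s - a 0 - Lc * s * (norm dl)\<^sup>2)) (at s)" for s
    unfolding p_def by (auto intro!: derivative_eq_intros psider simp: power2_eq_square)
  have "p 1 \<le> p 0"
  proof (rule DERIV_nonpos_imp_nonincreasing[of 0 1])
    fix s :: real assume "0 \<le> s" "s \<le> 1"
    then show "\<exists>y. (p has_real_derivative y) (at s) \<and> y \<le> 0"
      using dp[of s] aB[of s] by (intro exI[of _ "a s - a 0 - Lc * s * (norm dl)\<^sup>2"]) simp
  qed simp
  then have "psi 1 - a 0 \<le> Lc / 2 * (norm dl)\<^sup>2" by (simp add: p_def psi_def G_def)
  moreover have "psi 1 - a 0 = (\<integral>\<xi>. norm (e \<xi>) \<partial>M)"
  proof -
    have "psi 1 - a 0 = (\<integral>\<xi>. G 1 \<xi> - A 0 \<xi> \<partial>M)" unfolding psi_def a_def using Gi Ai by simp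
    also have "\<dots> = (\<integral>\<xi>. norm (e \<xi>) \<partial>M)"
      by (rule Bochner_Integration.integral_cong) (simp_all add: G_def A_def w_def e_def inner_diff_right inner_sgn_self[symmetric])
    finally show ?thesis .
  qed
  ultimately show "(\<integral>\<xi>. norm (c (x0 + dl) \<xi> - c x0 \<xi> - J x0 \<xi> dl) \<partial>M) \<le> Lc / 2 * (norm dl)\<^sup>2"
    unfolding e_def by simp
qed

end


lemma lip_deriv_bound:
  fixes f :: "'a::euclidean_space \<Rightarrow> 'b::real_normed_vector"
  assumes d: "(f has_derivative D) (at x)" and L: "L-lipschitz_on UNIV f"
  shows "norm (D v) \<le> L * norm v"
proof -
  have l: "(\<lambda>n. real (Suc n) *\<^sub>R (f (x + inverse (real (Suc n)) *\<^sub>R v) - f x)) \<longlonglongrightarrow> D v"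
    by (rule deriv_seq[OF d])
  have "norm (real (Suc n) *\<^sub>R (f (x + inverse (real (Suc n)) *\<^sub>R v) - f x)) \<le> L * norm v" for n
  proof -
    have "norm (real (Suc n) *\<^sub>R (f (x + inverse (real (Suc n)) *\<^sub>R v) - f x))
        = real (Suc n) * norm (f (x + inverse (real (Suc n)) *\<^sub>R v) - f x)" by simp
    also have "\<dots> \<le> real (Suc n) * (L * norm (inverse (real (Suc n)) *\<^sub>R v))"
      using lipschitz_onD[OF L, of "x + inverse (real (Suc n)) *\<^sub>R v" x]
      by (intro mult_left_mono) (auto simp: dist_norm simp del: of_nat_Suc)
    also have "\<dots> = L * norm v" by (simp del: of_nat_Suc)
    finally show ?thesis .
  qed
  then show ?thesis using LIMSEQ_le_const2[OF tendsto_norm[OF l]] by blast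
qed

lemma lip_grad_bound:
  fixes f :: "'a::euclidean_space \<Rightarrow> real"
  assumes d: "f differentiable (at x)" and L: "L-lipschitz_on UNIV f"
  shows "norm (grad f x) \<le> L"
proof -
  have "norm (inner (grad f x) (grad f x)) \<le> L * norm (grad f x)"
    by (rule lip_deriv_bound[OF grad_works[OF d] L])
  then have "norm (grad f x) * norm (grad f x) \<le> L * norm (grad f x)"
    by (simp add: power2_norm_eq_inner[symmetric] power2_eq_square)
  moreover have "0 \<le> L" using L lipschitz_on_nonneg by blast
  ultimately show ?thesis
  proof (cases "grad f x = 0")
    case False
    then have "0 < norm (grad f x)" by simp
    with \<open>norm (grad f x) * norm (grad f x) \<le> L * norm (grad f x)\<close> show ?thesis
      by (simp add: mult_le_cancel_right)
  qed simp
qed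

lemma sq_le_imp:
  assumes "(a::real)\<^sup>2 \<le> L\<^sup>2 * b\<^sup>2" "0 \<le> L" "0 \<le> b" shows "\<bar>a\<bar> \<le> L * b"
proof -
  have "a\<^sup>2 \<le> (L * b)\<^sup>2" using assms(1) by (simp add: power_mult_distrib)
  then have "\<bar>a\<bar> \<le> \<bar>L * b\<bar>" using abs_le_square_iff by blast
  then show ?thesis using assms(2,3) by simp
qed

locale setting = cset M c lc Lc
  for M :: "'xi measure" and c :: "'x::euclidean_space \<Rightarrow> 'xi \<Rightarrow> 'c::euclidean_space" and lc Lc +
  fixes X :: "'x set" and Y :: "'y::euclidean_space set"
    and h :: "'h::finite \<Rightarrow> 'c \<Rightarrow> real"
    and phi :: "real^'h \<Rightarrow> 'y \<Rightarrow> 'xi \<Rightarrow> real"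
    and lh lphi Lphi lam r :: real
  assumes Xne: "X \<noteq> {}" and Xcvx: "convex X" and Xcpt: "compact X"
    and phi_meas: "\<And>u y. (\<lambda>\<xi>. phi u y \<xi>) \<in> borel_measurable M"
    and f_int: "\<And>x y. integrable M (\<lambda>\<xi>. phi (hvec h (c x \<xi>)) y \<xi>)"
    and phi_diff: "\<And>p \<xi>. \<xi> \<in> space M \<Longrightarrow> (\<lambda>(u, y). phi u y \<xi>) differentiable (at p)"
    and h_cvx: "\<And>j. convex_on UNIV (h j)"
    and h_lip: "\<And>j. lh-lipschitz_on UNIV (h j)"
    and phi_mono: "\<And>u1 u2 y \<xi>. \<xi> \<in> space M \<Longrightarrow> (\<forall>j. u1 $ j \<le> u2 $ j) \<Longrightarrow> phi u1 y \<xi> \<le> phi u2 y \<xi>"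
    and phi_lip: "\<And>\<xi>. \<xi> \<in> space M \<Longrightarrow> lphi-lipschitz_on UNIV (\<lambda>(u, y). phi u y \<xi>)"
    and Lphi_nn: "0 \<le> Lphi"
    and D1phi_lip: "\<And>u1 u2 y1 y2 \<xi>. \<xi> \<in> space M \<Longrightarrow>
          (norm (grad (\<lambda>u. phi u y1 \<xi>) u1 - grad (\<lambda>u. phi u y2 \<xi>) u2))\<^sup>2
            \<le> Lphi\<^sup>2 * ((norm (u1 - u2))\<^sup>2 + (norm (y1 - y2))\<^sup>2)"
    and Dyphi_lip: "\<And>u1 u2 y1 y2 \<xi>. \<xi> \<in> space M \<Longrightarrow>
          (norm (grad (\<lambda>y. phi u1 y \<xi>) y1 - grad (\<lambda>y. phi u2 y \<xi>) y2))\<^sup>2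
            \<le> Lphi\<^sup>2 * ((norm (u1 - u2))\<^sup>2 + (norm (y1 - y2))\<^sup>2)"
    and lam_pos: "0 < lam"
begin

definition "dh = real CARD('h)"
definition "rho = dh * Lphi * lh\<^sup>2 * lc\<^sup>2 + Lc * lphi * lh * sqrt dh"
definition "U x \<xi> = hlam lam h (c x \<xi>)"
definition "V x \<xi> = hvec h (c x \<xi>)"
definition "F = Fobj M phi h c"
definition "Fl = Flam M lam phi h c"

lemma abs_int_le:
  fixes f :: "'xi \<Rightarrow> real"
  assumes "integrable M f" "\<And>\<xi>. \<xi> \<in> space M \<Longrightarrow> \<bar>f \<xi>\<bar> \<le> B"
  shows "\<bar>\<integral>\<xi>. f \<xi> \<partial>M\<bar> \<le> B"
proof -
  have "\<bar>\<integral>\<xi>. f \<xi> \<partial>M\<bar> \<le> (\<integral>\<xi>. \<bar>f \<xi>\<bar> \<partial>M)" using integral_norm_bound[of M f] by simp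
  also have "\<dots> \<le> (\<integral>\<xi>. B \<partial>M)" using assms by (intro integral_mono) auto
  finally show ?thesis using prob_space by simp
qed

lemma lh_nn: "0 \<le> lh" using h_lip lipschitz_on_nonneg by blast

lemma lphi_nn: "0 \<le> lphi"
proof -
  obtain \<xi> where "\<xi> \<in> space M" using not_empty by blast
  then show ?thesis using phi_lip lipschitz_on_nonneg by blast
qed

lemma dh_pos: "0 < dh" by (simp add: dh_def)

lemma rho_nn: "0 \<le> rho"
  unfolding rho_def using lh_nn lphi_nn Lphi_nn Lc_nn dh_pos by (intro add_nonneg_nonneg mult_nonneg_nonneg) auto

lemma phi_lip_u: assumes "\<xi> \<in> space M" shows "\<bar>phi u y \<xi> - phi u' y \<xi>\<bar> \<le> lphi * norm (u - u')"
  using lipschitz_onD[OF phi_lip[OF assms], of "(u, y)" "(u', y)"] by (simp add: dist_norm dist_Pair_Pair)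

lemma phi_lip_y: assumes "\<xi> \<in> space M" shows "\<bar>phi u y \<xi> - phi u y' \<xi>\<bar> \<le> lphi * norm (y - y')"
  using lipschitz_onD[OF phi_lip[OF assms], of "(u, y)" "(u, y')"] by (simp add: dist_norm dist_Pair_Pair)

lemma phi_lipschitz_u: assumes "\<xi> \<in> space M" shows "lphi-lipschitz_on UNIV (\<lambda>u. phi u y \<xi>)"
proof (rule lipschitz_onI)
  fix a b show "dist (phi a y \<xi>) (phi b y \<xi>) \<le> lphi * dist a b"
    using phi_lip_u[OF assms, of a y b] by (simp add: dist_real_def dist_norm)
qed (rule lphi_nn)

lemma phi_lipschitz_y: assumes "\<xi> \<in> space M" shows "lphi-lipschitz_on UNIV (\<lambda>y. phi u y \<xi>)"
proof (rule lipschitz_onI)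
  fix a b show "dist (phi u a \<xi>) (phi u b \<xi>) \<le> lphi * dist a b"
    using phi_lip_y[OF assms, of u a b] by (simp add: dist_real_def dist_norm)
qed (rule lphi_nn)

lemma phi_diff_u: assumes "\<xi> \<in> space M" shows "(\<lambda>u. phi u y \<xi>) differentiable (at u)"
proof -
  have "(\<lambda>u. (u, y)) differentiable (at u)" by (auto intro!: derivative_eq_intros simp: differentiable_def)
  from differentiable_chain_at[OF this phi_diff[OF assms]] show ?thesis by (simp add: o_def)
qed

lemma phi_diff_y: assumes "\<xi> \<in> space M" shows "(\<lambda>y. phi u y \<xi>) differentiable (at y)"
proof -
  have "(\<lambda>y. (u, y)) differentiable (at y)" by (auto intro!: derivative_eq_intros simp: differentiable_def)
  from differentiable_chain_at[OF this phi_diff[OF assms]] show ?thesis by (simp add: o_def)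
qed

lemma grad_u_lip: assumes \<xi>: "\<xi> \<in> space M"
  shows "norm (grad (\<lambda>u. phi u y \<xi>) a - grad (\<lambda>u. phi u y \<xi>) b) \<le> Lphi * norm (a - b)"
proof -
  have "(norm (grad (\<lambda>u. phi u y \<xi>) a - grad (\<lambda>u. phi u y \<xi>) b))\<^sup>2 \<le> Lphi\<^sup>2 * ((norm (a - b))\<^sup>2 + (norm (y - y))\<^sup>2)"
    (is "(norm ?g)\<^sup>2 \<le> Lphi\<^sup>2 * ((norm ?d)\<^sup>2 + _)")
    by (rule D1phi_lip[OF \<xi>])
  then have "\<bar>norm ?g\<bar> \<le> Lphi * norm ?d" by (intro sq_le_imp Lphi_nn norm_ge_zero) simp
  then show ?thesis by simp
qed

lemma grad_y_lip: assumes \<xi>: "\<xi> \<in> space M"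
  shows "norm (grad (\<lambda>y. phi u y \<xi>) a - grad (\<lambda>y. phi u y \<xi>) b) \<le> Lphi * norm (a - b)"
proof -
  have "(norm (grad (\<lambda>y. phi u y \<xi>) a - grad (\<lambda>y. phi u y \<xi>) b))\<^sup>2 \<le> Lphi\<^sup>2 * ((norm (u - u))\<^sup>2 + (norm (a - b))\<^sup>2)"
    (is "(norm ?g)\<^sup>2 \<le> Lphi\<^sup>2 * (_ + (norm ?d)\<^sup>2)")
    by (rule Dyphi_lip[OF \<xi>])
  then have "\<bar>norm ?g\<bar> \<le> Lphi * norm ?d" by (intro sq_le_imp Lphi_nn norm_ge_zero) simp
  then show ?thesis by simp
qed

lemma grad_y_lip_u: assumes \<xi>: "\<xi> \<in> space M"
  shows "norm (grad (\<lambda>y. phi u1 y \<xi>) y - grad (\<lambda>y. phi u2 y \<xi>) y) \<le> Lphi * norm (u1 - u2)"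
proof -
  have "(norm (grad (\<lambda>y. phi u1 y \<xi>) y - grad (\<lambda>y. phi u2 y \<xi>) y))\<^sup>2 \<le> Lphi\<^sup>2 * ((norm (u1 - u2))\<^sup>2 + (norm (y - y))\<^sup>2)"
    (is "(norm ?g)\<^sup>2 \<le> Lphi\<^sup>2 * ((norm ?d)\<^sup>2 + _)")
    by (rule Dyphi_lip[OF \<xi>])
  then have "\<bar>norm ?g\<bar> \<le> Lphi * norm ?d" by (intro sq_le_imp Lphi_nn norm_ge_zero) simp
  then show ?thesis by simp
qed

lemma hlam_nth: "hlam lam h w $ j = moreau lam (h j) w" by (simp add: hlam_def)
lemma hvec_nth: "hvec h w $ j = h j w" by (simp add: hvec_def)

lemma hv_hl_diff: "norm (hvec h w - hlam lam h w) \<le> sqrt dh * (lam * lh\<^sup>2 / 2)"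
  unfolding dh_def
proof (rule vec_norm_bound)
  fix j
  have a: "moreau lam (h j) w \<le> h j w" by (rule moreau_le_self[OF h_lip[of j] lam_pos])
  have b: "h j w - lam * lh\<^sup>2 / 2 \<le> moreau lam (h j) w" by (rule moreau_ge[OF h_lip[of j] lam_pos])
  have "(hvec h w - hlam lam h w) $ j = h j w - moreau lam (h j) w" by (simp only: vector_minus_component hlam_nth hvec_nth)
  then show "\<bar>(hvec h w - hlam lam h w) $ j\<bar> \<le> lam * lh\<^sup>2 / 2" using a b by linarith
qed

lemma hl_le_hv: "hlam lam h w $ j \<le> hvec h w $ j"
  unfolding hlam_nth hvec_nth by (rule moreau_le_self[OF h_lip[of j] lam_pos])

lemma hlam_lip: "norm (hlam lam h a - hlam lam h b) \<le> sqrt dh * (lh * norm (a - b))"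
  unfolding dh_def
proof (rule vec_norm_bound)
  fix j
  have "dist (moreau lam (h j) a) (moreau lam (h j) b) \<le> lh * dist a b"
    by (rule lipschitz_onD[OF moreau_lip[OF h_lip[of j] lam_pos]]) auto
  moreover have "(hlam lam h a - hlam lam h b) $ j = moreau lam (h j) a - moreau lam (h j) b"
    by (simp only: vector_minus_component hlam_nth)
  ultimately show "\<bar>(hlam lam h a - hlam lam h b) $ j\<bar> \<le> lh * norm (a - b)"
    by (simp only: dist_real_def dist_norm)
qed

lemma hvec_lip: "norm (hvec h a - hvec h b) \<le> sqrt dh * (lh * norm (a - b))"
  unfolding dh_def
proof (rule vec_norm_bound)
  fix j
  have "dist (h j a) (h j b) \<le> lh * dist a b"
    by (rule lipschitz_onD[OF h_lip[of j]]) auto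
  moreover have "(hvec h a - hvec h b) $ j = h j a - h j b"
    by (simp only: vector_minus_component hvec_nth)
  ultimately show "\<bar>(hvec h a - hvec h b) $ j\<bar> \<le> lh * norm (a - b)"
    by (simp only: dist_real_def dist_norm)
qed

lemma hlam_cont: "continuous_on UNIV (hlam lam h)"
proof -
  have "(sqrt dh * lh)-lipschitz_on UNIV (hlam lam h)"
    using hlam_lip lh_nn dh_pos by (intro lipschitz_onI) (auto simp: dist_norm mult.assoc)
  then show ?thesis by (rule lipschitz_on_continuous_on)
qed

lemma hvec_cont: "continuous_on UNIV (hvec h)"
proof -
  have "(sqrt dh * lh)-lipschitz_on UNIV (hvec h)"
    using hvec_lip lh_nn dh_pos by (intro lipschitz_onI) (auto simp: dist_norm mult.assoc)
  then show ?thesis by (rule lipschitz_on_continuous_on)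
qed

lemma U_meas: "U x \<in> borel_measurable M"
  unfolding U_def by (rule measurable_compose[OF c_meas borel_measurable_continuous_onI[OF hlam_cont]])

lemma V_meas: "V x \<in> borel_measurable M"
  unfolding V_def by (rule measurable_compose[OF c_meas borel_measurable_continuous_onI[OF hvec_cont]])

lemma phi_comp_meas:
  assumes "u \<in> borel_measurable M"
  shows "(\<lambda>\<xi>. phi (u \<xi>) y \<xi>) \<in> borel_measurable M"
  by (rule caratheodory_meas[where phi="\<lambda>v \<xi>. phi v y \<xi>", OF phi_meas _ assms])
     (rule lipschitz_on_continuous_on[OF phi_lipschitz_u])

lemma phi_comp_int:
  assumes um: "u \<in> borel_measurable M" and ub: "\<And>\<xi>. \<xi> \<in> space M \<Longrightarrow> norm (u \<xi> - V x \<xi>) \<le> K"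
  shows "integrable M (\<lambda>\<xi>. phi (u \<xi>) y \<xi>)"
proof -
  have "integrable M (\<lambda>\<xi>. (phi (u \<xi>) y \<xi> - phi (V x \<xi>) y \<xi>) + phi (V x \<xi>) y \<xi>)"
  proof (rule Bochner_Integration.integrable_add)
    show "integrable M (\<lambda>\<xi>. phi (V x \<xi>) y \<xi>)" using f_int by (simp add: V_def)
    show "integrable M (\<lambda>\<xi>. phi (u \<xi>) y \<xi> - phi (V x \<xi>) y \<xi>)"
    proof (rule integrable_const_bound[where B="lphi * K"])
      show "AE \<xi> in M. norm (phi (u \<xi>) y \<xi> - phi (V x \<xi>) y \<xi>) \<le> lphi * K"
      proof (rule AE_I2)
        fix \<xi> assume \<xi>: "\<xi> \<in> space M"
        have "\<bar>phi (u \<xi>) y \<xi> - phi (V x \<xi>) y \<xi>\<bar> \<le> lphi * norm (u \<xi> - V x \<xi>)" by (rule phi_lip_u[OF \<xi>])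
        also have "\<dots> \<le> lphi * K" by (rule mult_left_mono[OF ub[OF \<xi>] lphi_nn])
        finally show "norm (phi (u \<xi>) y \<xi> - phi (V x \<xi>) y \<xi>) \<le> lphi * K" by simp
      qed
      show "(\<lambda>\<xi>. phi (u \<xi>) y \<xi> - phi (V x \<xi>) y \<xi>) \<in> borel_measurable M"
        using phi_comp_meas[OF um] phi_comp_meas[OF V_meas] by measurable
    qed
  qed
  then show ?thesis by simp
qed

lemma U_int: "integrable M (\<lambda>\<xi>. phi (U x \<xi>) y \<xi>)"
  by (rule phi_comp_int[OF U_meas, where K="sqrt dh * (lam * lh\<^sup>2 / 2)" and x=x])
     (simp only: U_def V_def norm_minus_commute[of "hlam lam h _"] hv_hl_diff)

lemma V_int: "integrable M (\<lambda>\<xi>. phi (V x \<xi>) y \<xi>)"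
  using f_int by (simp add: V_def)

lemma F_eq: "F x y = (\<integral>\<xi>. phi (V x \<xi>) y \<xi> \<partial>M)" by (simp add: F_def Fobj_def V_def)
lemma Fl_eq: "Fl x y = (\<integral>\<xi>. phi (U x \<xi>) y \<xi> \<partial>M)" by (simp add: Fl_def Flam_def U_def)

lemma Fl_le_F: "Fl x y \<le> F x y"
  unfolding F_eq Fl_eq
  by (intro integral_mono U_int V_int phi_mono) (auto simp: U_def V_def hl_le_hv)

lemma F_le_Fl: "F x y - lphi * (sqrt dh * (lam * lh\<^sup>2 / 2)) \<le> Fl x y"
proof -
  have "F x y - Fl x y = (\<integral>\<xi>. phi (V x \<xi>) y \<xi> - phi (U x \<xi>) y \<xi> \<partial>M)"
    unfolding F_eq Fl_eq using U_int V_int by simp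
  also have "\<dots> \<le> (\<integral>\<xi>. lphi * (sqrt dh * (lam * lh\<^sup>2 / 2)) \<partial>M)"
  proof (intro integral_mono U_int V_int Bochner_Integration.integrable_diff)
    fix \<xi> assume \<xi>: "\<xi> \<in> space M"
    have "phi (V x \<xi>) y \<xi> - phi (U x \<xi>) y \<xi> \<le> lphi * norm (V x \<xi> - U x \<xi>)"
      using phi_lip_u[OF \<xi>] by (simp add: abs_le_iff)
    also have "\<dots> \<le> lphi * (sqrt dh * (lam * lh\<^sup>2 / 2))"
      using hv_hl_diff lphi_nn by (intro mult_left_mono) (auto simp: U_def V_def)
    finally show "phi (V x \<xi>) y \<xi> - phi (U x \<xi>) y \<xi> \<le> lphi * (sqrt dh * (lam * lh\<^sup>2 / 2))" .
  qed simp
  finally show ?thesis using prob_space by simp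
qed

lemma F_lip: "\<bar>F a y - F b y\<bar> \<le> lphi * lh * lc * sqrt dh * norm (a - b)"
proof -
  have "\<bar>F a y - F b y\<bar> = \<bar>\<integral>\<xi>. phi (V a \<xi>) y \<xi> - phi (V b \<xi>) y \<xi> \<partial>M\<bar>"
    unfolding F_eq using V_int by simp
  also have "\<dots> \<le> lphi * lh * lc * sqrt dh * norm (a - b)"
  proof (intro abs_int_le Bochner_Integration.integrable_diff V_int)
    fix \<xi> assume \<xi>: "\<xi> \<in> space M"
    have "\<bar>phi (V a \<xi>) y \<xi> - phi (V b \<xi>) y \<xi>\<bar> \<le> lphi * norm (V a \<xi> - V b \<xi>)" by (rule phi_lip_u[OF \<xi>])
    also have "\<dots> \<le> lphi * (sqrt dh * (lh * (lc * norm (a - b))))"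
    proof -
      have "norm (V a \<xi> - V b \<xi>) \<le> sqrt dh * (lh * norm (c a \<xi> - c b \<xi>))"
        unfolding V_def by (rule hvec_lip)
      also have "\<dots> \<le> sqrt dh * (lh * (lc * norm (a - b)))"
        using c_lipD[OF \<xi>, of a b] lh_nn dh_pos by (intro mult_left_mono) auto
      finally show ?thesis using lphi_nn by (intro mult_left_mono) auto
    qed
    finally show "\<bar>phi (V a \<xi>) y \<xi> - phi (V b \<xi>) y \<xi>\<bar> \<le> lphi * lh * lc * sqrt dh * norm (a - b)"
      by (simp add: ac_simps)
  qed
  finally show ?thesis .
qed

lemma Fl_lip: "\<bar>Fl a y - Fl b y\<bar> \<le> lphi * lh * lc * sqrt dh * norm (a - b)"
proof -
  have "\<bar>Fl a y - Fl b y\<bar> = \<bar>\<integral>\<xi>. phi (U a \<xi>) y \<xi> - phi (U b \<xi>) y \<xi> \<partial>M\<bar>"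
    unfolding Fl_eq using U_int by simp
  also have "\<dots> \<le> lphi * lh * lc * sqrt dh * norm (a - b)"
  proof (intro abs_int_le Bochner_Integration.integrable_diff U_int)
    fix \<xi> assume \<xi>: "\<xi> \<in> space M"
    have "\<bar>phi (U a \<xi>) y \<xi> - phi (U b \<xi>) y \<xi>\<bar> \<le> lphi * norm (U a \<xi> - U b \<xi>)" by (rule phi_lip_u[OF \<xi>])
    also have "\<dots> \<le> lphi * (sqrt dh * (lh * (lc * norm (a - b))))"
    proof -
      have "norm (U a \<xi> - U b \<xi>) \<le> sqrt dh * (lh * norm (c a \<xi> - c b \<xi>))"
        unfolding U_def by (rule hlam_lip)
      also have "\<dots> \<le> sqrt dh * (lh * (lc * norm (a - b)))"
        using c_lipD[OF \<xi>, of a b] lh_nn dh_pos by (intro mult_left_mono) auto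
      finally show ?thesis using lphi_nn by (intro mult_left_mono) auto
    qed
    finally show "\<bar>phi (U a \<xi>) y \<xi> - phi (U b \<xi>) y \<xi>\<bar> \<le> lphi * lh * lc * sqrt dh * norm (a - b)"
      by (simp add: ac_simps)
  qed
  finally show ?thesis .
qed

end


context setting begin

lemma phi_wc:
  assumes \<xi>: "\<xi> \<in> space M" and t: "0 \<le> t" "t \<le> 1"
  shows "phi (t *\<^sub>R u1 + (1 - t) *\<^sub>R u2) y \<xi> \<le> t * phi u1 y \<xi> + (1 - t) * phi u2 y \<xi> + Lphi / 2 * (t * (1 - t)) * (norm (u1 - u2))\<^sup>2"
proof -
  define ub where "ub = t *\<^sub>R u1 + (1 - t) *\<^sub>R u2"
  define g where "g = grad (\<lambda>u. phi u y \<xi>) ub"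
  define D where "D = u1 - u2"
  have der: "\<And>z. ((\<lambda>u. phi u y \<xi>) has_derivative (\<lambda>v. inner (grad (\<lambda>u. phi u y \<xi>) z) v)) (at z)"
    by (rule grad_works[OF phi_diff_u[OF \<xi>]])
  have d1: "u1 - ub = (1 - t) *\<^sub>R D" by (simp add: ub_def D_def algebra_simps)
  have d2: "u2 - ub = (- t) *\<^sub>R D" by (simp add: ub_def D_def algebra_simps)
  have "\<bar>phi u1 y \<xi> - phi ub y \<xi> - inner g (u1 - ub)\<bar> \<le> Lphi / 2 * (norm (u1 - ub))\<^sup>2"
    unfolding g_def by (rule descent[OF der grad_u_lip[OF \<xi>]])
  then have "\<bar>phi u1 y \<xi> - phi ub y \<xi> - (1 - t) * inner g D\<bar> \<le> Lphi / 2 * ((1 - t)\<^sup>2 * (norm D)\<^sup>2)"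
    unfolding d1 using t by (simp only: norm_scaleR inner_scaleR_right power_mult_distrib abs_of_nonneg diff_ge_0_iff_ge power2_abs)
  then have a1: "phi u1 y \<xi> - phi ub y \<xi> - (1 - t) * inner g D \<ge> - (Lphi / 2 * ((1 - t)\<^sup>2 * (norm D)\<^sup>2))"
    by linarith
  have "\<bar>phi u2 y \<xi> - phi ub y \<xi> - inner g (u2 - ub)\<bar> \<le> Lphi / 2 * (norm (u2 - ub))\<^sup>2"
    unfolding g_def by (rule descent[OF der grad_u_lip[OF \<xi>]])
  then have "\<bar>phi u2 y \<xi> - phi ub y \<xi> + t * inner g D\<bar> \<le> Lphi / 2 * (t\<^sup>2 * (norm D)\<^sup>2)"
    unfolding d2 using t by (simp add: power_mult_distrib)
  then have a2: "phi u2 y \<xi> - phi ub y \<xi> + t * inner g D \<ge> - (Lphi / 2 * (t\<^sup>2 * (norm D)\<^sup>2))"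
    by linarith
  have "t * (phi u1 y \<xi> - phi ub y \<xi> - (1 - t) * inner g D) \<ge> t * (- (Lphi / 2 * ((1 - t)\<^sup>2 * (norm D)\<^sup>2)))"
    using a1 t by (intro mult_left_mono) auto
  moreover have "(1 - t) * (phi u2 y \<xi> - phi ub y \<xi> + t * inner g D) \<ge> (1 - t) * (- (Lphi / 2 * (t\<^sup>2 * (norm D)\<^sup>2)))"
    using a2 t by (intro mult_left_mono) auto
  ultimately have "t * (phi u1 y \<xi> - phi ub y \<xi> - (1 - t) * inner g D) + (1 - t) * (phi u2 y \<xi> - phi ub y \<xi> + t * inner g D)
     \<ge> t * (- (Lphi / 2 * ((1 - t)\<^sup>2 * (norm D)\<^sup>2))) + (1 - t) * (- (Lphi / 2 * (t\<^sup>2 * (norm D)\<^sup>2)))" by linarith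
  moreover have "t * (phi u1 y \<xi> - phi ub y \<xi> - (1 - t) * inner g D) + (1 - t) * (phi u2 y \<xi> - phi ub y \<xi> + t * inner g D)
     = t * phi u1 y \<xi> + (1 - t) * phi u2 y \<xi> - phi ub y \<xi>" by (simp add: algebra_simps)
  moreover have "t * (- (Lphi / 2 * ((1 - t)\<^sup>2 * (norm D)\<^sup>2))) + (1 - t) * (- (Lphi / 2 * (t\<^sup>2 * (norm D)\<^sup>2)))
     = - (Lphi / 2 * (t * (1 - t)) * (norm D)\<^sup>2)" by (simp add: field_simps power2_eq_square)
  ultimately show ?thesis unfolding ub_def[symmetric] D_def[symmetric] by linarith
qed

lemma U_wc_pt:
  fixes x1 x2 :: 'x and t :: real
  assumes \<xi>: "\<xi> \<in> space M" and t: "0 \<le> t" "t \<le> 1"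
  defines "x0 \<equiv> t *\<^sub>R x1 + (1 - t) *\<^sub>R x2"
  shows "phi (U x0 \<xi>) y \<xi> \<le> t * phi (U x1 \<xi>) y \<xi> + (1 - t) * phi (U x2 \<xi>) y \<xi>
      + Lphi / 2 * (t * (1 - t)) * (dh * lh\<^sup>2 * lc\<^sup>2 * (norm (x1 - x2))\<^sup>2)
      + lphi * sqrt dh * lh * (t * norm (c (x0 + (x1 - x0)) \<xi> - c x0 \<xi> - J x0 \<xi> (x1 - x0))
                            + (1 - t) * norm (c (x0 + (x2 - x0)) \<xi> - c x0 \<xi> - J x0 \<xi> (x2 - x0)))"
proof -
  define e1 where "e1 = c (x0 + (x1 - x0)) \<xi> - c x0 \<xi> - J x0 \<xi> (x1 - x0)"
  define e2 where "e2 = c (x0 + (x2 - x0)) \<xi> - c x0 \<xi> - J x0 \<xi> (x2 - x0)"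
  define m where "m = t * norm e1 + (1 - t) * norm e2"
  have m0: "0 \<le> m" unfolding m_def using t by simp
  define ub where "ub = t *\<^sub>R U x1 \<xi> + (1 - t) *\<^sub>R U x2 \<xi>"
  have a: "phi ub y \<xi> \<le> t * phi (U x1 \<xi>) y \<xi> + (1 - t) * phi (U x2 \<xi>) y \<xi> + Lphi / 2 * (t * (1 - t)) * (norm (U x1 \<xi> - U x2 \<xi>))\<^sup>2"
    unfolding ub_def by (rule phi_wc[OF \<xi> t])
  have "norm (U x1 \<xi> - U x2 \<xi>) \<le> sqrt dh * (lh * norm (c x1 \<xi> - c x2 \<xi>))"
    unfolding U_def by (rule hlam_lip)
  also have "\<dots> \<le> sqrt dh * (lh * (lc * norm (x1 - x2)))"
    using c_lipD[OF \<xi>, of x1 x2] lh_nn dh_pos by (intro mult_left_mono) auto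
  finally have "(norm (U x1 \<xi> - U x2 \<xi>))\<^sup>2 \<le> (sqrt dh * (lh * (lc * norm (x1 - x2))))\<^sup>2"
    by (intro power_mono) auto
  also have "\<dots> = dh * lh\<^sup>2 * lc\<^sup>2 * (norm (x1 - x2))\<^sup>2"
    using dh_pos by (simp add: power_mult_distrib)
  finally have b: "Lphi / 2 * (t * (1 - t)) * (norm (U x1 \<xi> - U x2 \<xi>))\<^sup>2 \<le> Lphi / 2 * (t * (1 - t)) * (dh * lh\<^sup>2 * lc\<^sup>2 * (norm (x1 - x2))\<^sup>2)"
    using t Lphi_nn by (intro mult_left_mono) auto
  have lin: "linear (J x0 \<xi>)" using J_bl[OF \<xi>] bounded_linear.linear by blast
  have "t *\<^sub>R (x1 - x0) + (1 - t) *\<^sub>R (x2 - x0) = 0"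
    unfolding x0_def by (simp add: algebra_simps)
  then have "J x0 \<xi> (t *\<^sub>R (x1 - x0) + (1 - t) *\<^sub>R (x2 - x0)) = 0" using linear_0[OF lin] by simp
  then have J0: "t *\<^sub>R J x0 \<xi> (x1 - x0) + (1 - t) *\<^sub>R J x0 \<xi> (x2 - x0) = 0"
    by (simp add: linear_add[OF lin] linear_scale[OF lin])
  have ce: "t *\<^sub>R c x1 \<xi> + (1 - t) *\<^sub>R c x2 \<xi> - c x0 \<xi> = t *\<^sub>R e1 + (1 - t) *\<^sub>R e2"
  proof -
    have "t *\<^sub>R e1 + (1 - t) *\<^sub>R e2 = t *\<^sub>R c x1 \<xi> + (1 - t) *\<^sub>R c x2 \<xi> - c x0 \<xi>
        - (t *\<^sub>R J x0 \<xi> (x1 - x0) + (1 - t) *\<^sub>R J x0 \<xi> (x2 - x0))"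
      unfolding e1_def e2_def by (simp add: algebra_simps)
    then show ?thesis using J0 by simp
  qed
  have nce: "norm (t *\<^sub>R c x1 \<xi> + (1 - t) *\<^sub>R c x2 \<xi> - c x0 \<xi>) \<le> m"
  proof -
    have "norm (t *\<^sub>R e1 + (1 - t) *\<^sub>R e2) \<le> norm (t *\<^sub>R e1) + norm ((1 - t) *\<^sub>R e2)" by (rule norm_triangle_ineq)
    also have "\<dots> = m" unfolding m_def using t by simp
    finally show ?thesis unfolding ce .
  qed
  have comp: "U x0 \<xi> $ j - lh * m \<le> ub $ j" for j
  proof -
    have cv: "convex_on UNIV (moreau lam (h j))" by (rule moreau_convex[OF h_lip[of j] lam_pos h_cvx])
    have "moreau lam (h j) ((1 - (1 - t)) *\<^sub>R c x1 \<xi> + (1 - t) *\<^sub>R c x2 \<xi>)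
        \<le> (1 - (1 - t)) * moreau lam (h j) (c x1 \<xi>) + (1 - t) * moreau lam (h j) (c x2 \<xi>)"
      by (rule convex_onD[OF cv]) (use t in auto)
    then have c1: "moreau lam (h j) (t *\<^sub>R c x1 \<xi> + (1 - t) *\<^sub>R c x2 \<xi>) \<le> ub $ j"
      by (simp add: ub_def U_def hlam_nth)
    have "dist (moreau lam (h j) (c x0 \<xi>)) (moreau lam (h j) (t *\<^sub>R c x1 \<xi> + (1 - t) *\<^sub>R c x2 \<xi>))
        \<le> lh * dist (c x0 \<xi>) (t *\<^sub>R c x1 \<xi> + (1 - t) *\<^sub>R c x2 \<xi>)"
      by (rule lipschitz_onD[OF moreau_lip[OF h_lip[of j] lam_pos]]) auto
    also have "\<dots> \<le> lh * m"
      using nce lh_nn by (intro mult_left_mono) (auto simp: dist_norm norm_minus_commute)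
    finally have "moreau lam (h j) (c x0 \<xi>) - lh * m \<le> moreau lam (h j) (t *\<^sub>R c x1 \<xi> + (1 - t) *\<^sub>R c x2 \<xi>)"
      by (simp add: dist_real_def abs_le_iff)
    then show ?thesis using c1 by (simp add: U_def hlam_nth)
  qed
  define sh :: "real^'h" where "sh = (\<chi> j. lh * m)"
  have e: "phi (U x0 \<xi> - sh) y \<xi> \<le> phi ub y \<xi>"
    by (rule phi_mono[OF \<xi>]) (use comp in \<open>simp add: sh_def\<close>)
  have "norm sh \<le> sqrt dh * (lh * m)"
    unfolding dh_def sh_def by (rule vec_norm_bound) (use lh_nn m0 in simp)
  then have l1: "lphi * norm sh \<le> lphi * (sqrt dh * (lh * m))" by (rule mult_left_mono[OF _ lphi_nn])
  have l2: "\<bar>phi (U x0 \<xi>) y \<xi> - phi (U x0 \<xi> - sh) y \<xi>\<bar> \<le> lphi * norm sh"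
    using phi_lip_u[OF \<xi>, of "U x0 \<xi>" y "U x0 \<xi> - sh"] by simp
  have "phi (U x0 \<xi>) y \<xi> - phi (U x0 \<xi> - sh) y \<xi> \<le> lphi * (sqrt dh * (lh * m))"
    using l1 l2 by linarith
  then have f: "phi (U x0 \<xi>) y \<xi> \<le> phi ub y \<xi> + lphi * sqrt dh * lh * m" using e by (simp add: ac_simps)
  show ?thesis using a b f unfolding m_def e1_def e2_def by linarith
qed

lemma Fl_wc:
  fixes x1 x2 :: 'x and t :: real
  assumes t: "0 \<le> t" "t \<le> 1"
  shows "Fl (t *\<^sub>R x1 + (1 - t) *\<^sub>R x2) y \<le> t * Fl x1 y + (1 - t) * Fl x2 y + rho / 2 * (t * (1 - t)) * (norm (x1 - x2))\<^sup>2"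
proof -
  define x0 where "x0 = t *\<^sub>R x1 + (1 - t) *\<^sub>R x2"
  define E1 where "E1 \<xi> = norm (c (x0 + (x1 - x0)) \<xi> - c x0 \<xi> - J x0 \<xi> (x1 - x0))" for \<xi>
  define E2 where "E2 \<xi> = norm (c (x0 + (x2 - x0)) \<xi> - c x0 \<xi> - J x0 \<xi> (x2 - x0))" for \<xi>
  have iE1: "integrable M E1" unfolding E1_def by (rule err_bound(1))
  have iE2: "integrable M E2" unfolding E2_def by (rule err_bound(1))
  have bE1: "(\<integral>\<xi>. E1 \<xi> \<partial>M) \<le> Lc / 2 * (norm (x1 - x0))\<^sup>2" unfolding E1_def by (rule err_bound(2))
  have bE2: "(\<integral>\<xi>. E2 \<xi> \<partial>M) \<le> Lc / 2 * (norm (x2 - x0))\<^sup>2" unfolding E2_def by (rule err_bound(2))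
  define C where "C = Lphi / 2 * (t * (1 - t)) * (dh * lh\<^sup>2 * lc\<^sup>2 * (norm (x1 - x2))\<^sup>2)"
  define K where "K = lphi * sqrt dh * lh"
  have K0: "0 \<le> K" unfolding K_def using lphi_nn lh_nn dh_pos by simp
  have "Fl x0 y = (\<integral>\<xi>. phi (U x0 \<xi>) y \<xi> \<partial>M)" by (rule Fl_eq)
  also have "\<dots> \<le> (\<integral>\<xi>. t * phi (U x1 \<xi>) y \<xi> + (1 - t) * phi (U x2 \<xi>) y \<xi> + C + K * (t * E1 \<xi> + (1 - t) * E2 \<xi>) \<partial>M)"
  proof (rule integral_mono)
    show "integrable M (\<lambda>\<xi>. phi (U x0 \<xi>) y \<xi>)" by (rule U_int)
    show "integrable M (\<lambda>\<xi>. t * phi (U x1 \<xi>) y \<xi> + (1 - t) * phi (U x2 \<xi>) y \<xi> + C + K * (t * E1 \<xi> + (1 - t) * E2 \<xi>))"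
      using U_int iE1 iE2 by (intro Bochner_Integration.integrable_add integrable_mult_right integrable_const) auto
    fix \<xi> assume \<xi>: "\<xi> \<in> space M"
    show "phi (U x0 \<xi>) y \<xi> \<le> t * phi (U x1 \<xi>) y \<xi> + (1 - t) * phi (U x2 \<xi>) y \<xi> + C + K * (t * E1 \<xi> + (1 - t) * E2 \<xi>)"
      using U_wc_pt[OF \<xi> t, of x1 x2 y] unfolding x0_def[symmetric] C_def K_def E1_def E2_def by simp
  qed
  also have "\<dots> = t * Fl x1 y + (1 - t) * Fl x2 y + C + K * (t * (\<integral>\<xi>. E1 \<xi> \<partial>M) + (1 - t) * (\<integral>\<xi>. E2 \<xi> \<partial>M))"
    using U_int iE1 iE2 prob_space by (simp add: Fl_eq)
  also have "\<dots> \<le> t * Fl x1 y + (1 - t) * Fl x2 y + C + K * (t * (Lc / 2 * (norm (x1 - x0))\<^sup>2) + (1 - t) * (Lc / 2 * (norm (x2 - x0))\<^sup>2))"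
    using bE1 bE2 t K0 by (intro add_left_mono mult_left_mono add_mono) auto
  also have "\<dots> = t * Fl x1 y + (1 - t) * Fl x2 y + rho / 2 * (t * (1 - t)) * (norm (x1 - x2))\<^sup>2"
  proof -
    have n1: "(norm (x1 - x0))\<^sup>2 = (1 - t)\<^sup>2 * (norm (x1 - x2))\<^sup>2"
    proof -
      have "x1 - x0 = (1 - t) *\<^sub>R (x1 - x2)" unfolding x0_def by (simp add: algebra_simps)
      then show ?thesis by (simp add: power_mult_distrib)
    qed
    have n2: "(norm (x2 - x0))\<^sup>2 = t\<^sup>2 * (norm (x1 - x2))\<^sup>2"
    proof -
      have "x2 - x0 = (- t) *\<^sub>R (x1 - x2)" unfolding x0_def by (simp add: algebra_simps)
      then show ?thesis by (simp add: power_mult_distrib)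
    qed
    show ?thesis unfolding n1 n2 C_def K_def rho_def by (simp add: field_simps power2_eq_square)
  qed
  finally show ?thesis unfolding x0_def .
qed

end


lemma sq_shift:
  fixes a k :: "'a::real_inner"
  shows "(norm (a - k))\<^sup>2 - (norm a)\<^sup>2 = - 2 * inner a k + (norm k)\<^sup>2"
  by (simp add: power2_norm_eq_inner inner_diff_left inner_diff_right inner_commute algebra_simps)

context setting begin

definition "Phi y z x' = Fl x' y + r / 2 * (norm (x' - z))\<^sup>2"
definition "xh y z = (SOME x. x \<in> X \<and> (\<forall>x'\<in>X. Phi y z x \<le> Phi y z x'))"

lemma Fl_cont: "continuous_on A (\<lambda>x. Fl x y)"
proof -
  have "(lphi * lh * lc * sqrt dh)-lipschitz_on A (\<lambda>x. Fl x y)"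
  proof (rule lipschitz_onI)
    fix a b show "dist (Fl a y) (Fl b y) \<le> lphi * lh * lc * sqrt dh * dist a b"
      using Fl_lip[of a y b] by (simp add: dist_real_def dist_norm)
    show "0 \<le> lphi * lh * lc * sqrt dh" using lphi_nn lh_nn lc_nn dh_pos by simp
  qed
  then show ?thesis by (rule lipschitz_on_continuous_on)
qed

lemma xh_prop: "xh y z \<in> X \<and> (\<forall>x'\<in>X. Phi y z (xh y z) \<le> Phi y z x')"
proof -
  have "continuous_on X (Phi y z)" unfolding Phi_def
    by (intro continuous_intros Fl_cont)
  then have "\<exists>x\<in>X. \<forall>x'\<in>X. Phi y z x \<le> Phi y z x'"
    by (intro continuous_attains_inf Xcpt Xne)
  then show ?thesis unfolding xh_def by (rule someI_ex[where P="\<lambda>x. x \<in> X \<and> (\<forall>x'\<in>X. Phi y z x \<le> Phi y z x')", OF bexE]) blast+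
qed

lemma xh_in: "xh y z \<in> X" using xh_prop by blast
lemma xh_min: "x' \<in> X \<Longrightarrow> Phi y z (xh y z) \<le> Phi y z x'" using xh_prop by blast

lemma d_eq: "dlam M lam r X phi h c y z = Phi y z (xh y z)"
  unfolding dlam_def
proof (rule cInf_eq_minimum)
  show "Phi y z (xh y z) \<in> (\<lambda>x. Flam M lam phi h c x y + r / 2 * (norm (x - z))\<^sup>2) ` X"
    using xh_in by (auto simp: Phi_def Fl_def)
  show "\<And>v. v \<in> (\<lambda>x. Flam M lam phi h c x y + r / 2 * (norm (x - z))\<^sup>2) ` X \<Longrightarrow> Phi y z (xh y z) \<le> v"
    using xh_min by (auto simp: Phi_def Fl_def)
qed

lemma strong:
  assumes r: "rho < r" and x': "x' \<in> X"
  shows "Phi y z (xh y z) + (r - rho) / 2 * (norm (x' - xh y z))\<^sup>2 \<le> Phi y z x'"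
proof -
  define a where "a = xh y z"
  have aX: "a \<in> X" unfolding a_def by (rule xh_in)
  define A where "A = Phi y z x' - Phi y z a"
  define B where "B = (r - rho) / 2 * (norm (x' - a))\<^sup>2"
  have B0: "0 \<le> B" unfolding B_def using r by simp
  have key: "(1 - s) * B \<le> A" if s: "0 < s" "s \<le> 1" for s
  proof -
    define xs where "xs = s *\<^sub>R x' + (1 - s) *\<^sub>R a"
    have xsX: "xs \<in> X" unfolding xs_def using Xcvx x' aX s
      by (metis convexD add.commute diff_ge_0_iff_ge less_eq_real_def diff_add_cancel)
    have m: "Phi y z a \<le> Phi y z xs" unfolding a_def by (rule xh_min[OF xsX[unfolded a_def]])
    have w: "Fl xs y \<le> s * Fl x' y + (1 - s) * Fl a y + rho / 2 * (s * (1 - s)) * (norm (x' - a))\<^sup>2"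
      unfolding xs_def by (rule Fl_wc) (use s in auto)
    have q: "(1 - s) * (norm (a - z))\<^sup>2 + s * (norm (x' - z))\<^sup>2 - (norm ((1 - s) *\<^sub>R (a - z) + s *\<^sub>R (x' - z)))\<^sup>2
        = s * (1 - s) * (norm ((a - z) - (x' - z)))\<^sup>2" by (rule quad_id)
    have "(1 - s) *\<^sub>R (a - z) + s *\<^sub>R (x' - z) = xs - z" unfolding xs_def by (simp add: algebra_simps)
    moreover have "norm ((a - z) - (x' - z)) = norm (x' - a)" by (simp add: norm_minus_commute)
    ultimately have q2: "(norm (xs - z))\<^sup>2 = (1 - s) * (norm (a - z))\<^sup>2 + s * (norm (x' - z))\<^sup>2 - s * (1 - s) * (norm (x' - a))\<^sup>2"
      using q by simp
    have "Phi y z xs \<le> s * Phi y z x' + (1 - s) * Phi y z a - s * (1 - s) * B"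
    proof -
      have "Phi y z xs = Fl xs y + r / 2 * (norm (xs - z))\<^sup>2" by (simp add: Phi_def)
      also have "\<dots> \<le> s * Fl x' y + (1 - s) * Fl a y + rho / 2 * (s * (1 - s)) * (norm (x' - a))\<^sup>2
          + r / 2 * ((1 - s) * (norm (a - z))\<^sup>2 + s * (norm (x' - z))\<^sup>2 - s * (1 - s) * (norm (x' - a))\<^sup>2)"
        using w unfolding q2 by simp
      also have "\<dots> = s * Phi y z x' + (1 - s) * Phi y z a - s * (1 - s) * B"
        by (simp add: Phi_def B_def field_simps)
      finally show ?thesis .
    qed
    with m have "s * ((1 - s) * B) \<le> s * A" unfolding A_def by (simp add: algebra_simps)
    then show ?thesis using s by simp
  qed
  have "B \<le> A"
  proof (rule ccontr)
    assume "\<not> B \<le> A"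
    then have AB: "A < B" by simp
    then have Bp: "0 < B" using key[of 1] by simp
    define s where "s = (B - A) / (2 * B)"
    have s0: "0 < s" unfolding s_def using AB Bp by simp
    have "A \<ge> -0" using key[of 1] by simp
    then have s1: "s \<le> 1" unfolding s_def using AB Bp by (simp add: divide_le_eq)
    have "(1 - s) * B = (A + B) / 2" unfolding s_def using Bp by (simp add: field_simps)
    then show False using key[OF s0 s1] AB by simp
  qed
  then show ?thesis unfolding A_def B_def a_def by simp
qed

lemma xh_lip:
  assumes r: "rho < r"
  shows "norm (xh y z - xh y z') \<le> r / (r - rho) * norm (z - z')"
proof -
  define a where "a = xh y z"
  define a' where "a' = xh y z'"
  have s1: "Phi y z a + (r - rho) / 2 * (norm (a' - a))\<^sup>2 \<le> Phi y z a'"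
    unfolding a_def a'_def by (rule strong[OF r xh_in])
  have s2: "Phi y z' a' + (r - rho) / 2 * (norm (a - a'))\<^sup>2 \<le> Phi y z' a"
    unfolding a_def a'_def by (rule strong[OF r xh_in])
  have id: "Phi y z a' - Phi y z a + Phi y z' a - Phi y z' a' = r * inner (a' - a) (z' - z)"
    unfolding Phi_def
    by (simp add: power2_norm_eq_inner inner_diff_left inner_diff_right inner_commute algebra_simps)
  have "(r - rho) * (norm (a - a'))\<^sup>2 \<le> r * inner (a' - a) (z' - z)"
    using s1 s2 id by (simp add: norm_minus_commute[of a' a]) 
  also have "\<dots> \<le> r * (norm (a' - a) * norm (z' - z))"
    using r rho_nn by (intro mult_left_mono Cauchy_Schwarz_ineq2[THEN order_trans[OF abs_ge_self]]) auto
  finally have le: "(r - rho) * (norm (a - a'))\<^sup>2 \<le> r * (norm (a - a') * norm (z - z'))"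
    by (simp add: norm_minus_commute)
  show ?thesis
  proof (cases "a = a'")
    case True then show ?thesis unfolding a_def a'_def using r rho_nn by simp
  next
    case False
    then have p: "0 < norm (a - a')" by simp
    from le have "(r - rho) * norm (a - a') * norm (a - a') \<le> r * norm (z - z') * norm (a - a')"
      by (simp add: power2_eq_square algebra_simps)
    then have "(r - rho) * norm (a - a') \<le> r * norm (z - z')" using p by (simp add: mult_le_cancel_right)
    then show ?thesis unfolding a_def[symmetric] a'_def[symmetric] using r by (simp add: field_simps)
  qed
qed

lemma d_deriv:
  assumes r: "rho < r"
  shows "(dlam M lam r X phi h c y has_derivative (\<lambda>k. inner (r *\<^sub>R (z - xh y z)) k)) (at z)"
proof (rule quad_has_derivative[where C="r / 2 + r * (r / (r - rho))"])
  fix k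
  define a where "a = xh y z"
  define a' where "a' = xh y (z + k)"
  define g where "g = r *\<^sub>R (z - a)"
  have dz: "dlam M lam r X phi h c y z = Phi y z a" unfolding a_def by (rule d_eq)
  have dzk: "dlam M lam r X phi h c y (z + k) = Phi y (z + k) a'" unfolding a'_def by (rule d_eq)
  have up: "Phi y (z + k) a' \<le> Phi y (z + k) a" unfolding a'_def by (rule xh_min[OF xh_in[of y z, folded a_def]])
  have lo: "Phi y z a \<le> Phi y z a'" unfolding a_def by (rule xh_min[OF xh_in[of y "z + k", folded a'_def]])
  have e1: "Phi y (z + k) a - Phi y z a = inner g k + r / 2 * (norm k)\<^sup>2"
  proof -
    have h1: "(norm ((a - z) - k))\<^sup>2 = (norm (a - z))\<^sup>2 - 2 * inner (a - z) k + (norm k)\<^sup>2"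
      using sq_shift[of "a - z" k] by linarith
    have e: "a - (z + k) = (a - z) - k" by simp
    have "Phi y (z + k) a - Phi y z a = r / 2 * ((norm (a - z))\<^sup>2 - 2 * inner (a - z) k + (norm k)\<^sup>2) - r / 2 * (norm (a - z))\<^sup>2"
      unfolding Phi_def e h1 by simp
    then show ?thesis unfolding g_def by (simp add: algebra_simps inner_diff_left)
  qed
  have e2: "Phi y (z + k) a' - Phi y z a' = inner g k - r * inner (a' - a) k + r / 2 * (norm k)\<^sup>2"
  proof -
    have h1: "(norm ((a' - z) - k))\<^sup>2 = (norm (a' - z))\<^sup>2 - 2 * inner (a' - z) k + (norm k)\<^sup>2"
      using sq_shift[of "a' - z" k] by linarith
    have e: "a' - (z + k) = (a' - z) - k" by simp
    have "Phi y (z + k) a' - Phi y z a' = r / 2 * ((norm (a' - z))\<^sup>2 - 2 * inner (a' - z) k + (norm k)\<^sup>2) - r / 2 * (norm (a' - z))\<^sup>2"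
      unfolding Phi_def e h1 by simp
    then show ?thesis unfolding g_def by (simp add: algebra_simps inner_diff_left)
  qed
  have "\<bar>r * inner (a' - a) k\<bar> \<le> r * (norm (a' - a) * norm k)"
    using r rho_nn Cauchy_Schwarz_ineq2[of "a' - a" k] by (simp add: abs_mult)
  also have "\<dots> \<le> r * ((r / (r - rho) * norm k) * norm k)"
  proof -
    have "norm (a' - a) \<le> r / (r - rho) * norm (z + k - z)"
      unfolding a_def a'_def using xh_lip[OF r, of y "z + k" z] by simp
    then show ?thesis using r rho_nn by (intro mult_left_mono mult_right_mono) auto
  qed
  finally have cs: "\<bar>r * inner (a' - a) k\<bar> \<le> r * (r / (r - rho)) * (norm k)\<^sup>2"
    by (simp add: power2_eq_square algebra_simps)
  have "r / 2 * (norm k)\<^sup>2 \<ge> 0" using r rho_nn by simp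
  have "r * (r / (r - rho)) * (norm k)\<^sup>2 \<ge> 0" using r rho_nn by simp
  show "\<bar>dlam M lam r X phi h c y (z + k) - dlam M lam r X phi h c y z - inner (r *\<^sub>R (z - xh y z)) k\<bar>
      \<le> (r / 2 + r * (r / (r - rho))) * (norm k)\<^sup>2"
  proof -
    have gk: "inner (r *\<^sub>R (z - xh y z)) k = inner g k" unfolding g_def a_def ..
    have A: "Phi y (z + k) a' - Phi y z a - inner g k \<le> r / 2 * (norm k)\<^sup>2" using up e1 by linarith
    have B: "Phi y (z + k) a' - Phi y z a - inner g k \<ge> - (r * (r / (r - rho)) * (norm k)\<^sup>2)"
      using lo e2 cs \<open>r / 2 * (norm k)\<^sup>2 \<ge> 0\<close> unfolding abs_le_iff by linarith
    have "\<bar>Phi y (z + k) a' - Phi y z a - inner g k\<bar> \<le> (r / 2 + r * (r / (r - rho))) * (norm k)\<^sup>2"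
      using A B \<open>r / 2 * (norm k)\<^sup>2 \<ge> 0\<close> \<open>r * (r / (r - rho)) * (norm k)\<^sup>2 \<ge> 0\<close>
      unfolding abs_le_iff distrib_right by linarith
    then show ?thesis unfolding dz dzk gk .
  qed
qed

end


context setting begin

lemma ygrad:
  assumes um: "u \<in> borel_measurable M" and ui: "\<And>y'. integrable M (\<lambda>\<xi>. phi (u \<xi>) y' \<xi>)"
  shows "integrable M (\<lambda>\<xi>. grad (\<lambda>y'. phi (u \<xi>) y' \<xi>) y)"
    and "((\<lambda>y'. \<integral>\<xi>. phi (u \<xi>) y' \<xi> \<partial>M) has_derivative
          (\<lambda>k. inner (\<integral>\<xi>. grad (\<lambda>y'. phi (u \<xi>) y' \<xi>) y \<partial>M) k)) (at y)"
proof -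
  define G where "G \<xi> = grad (\<lambda>y'. phi (u \<xi>) y' \<xi>) y" for \<xi>
  have der: "\<And>z. ((\<lambda>y'. phi (u \<xi>) y' \<xi>) has_derivative (\<lambda>v. inner (grad (\<lambda>y'. phi (u \<xi>) y' \<xi>) z) v)) (at z)"
    if "\<xi> \<in> space M" for \<xi> by (rule grad_works[OF phi_diff_y[OF that]])
  have Gm: "G \<in> borel_measurable M"
  proof (rule borel_measurable_euclidean_space[THEN iffD2], intro ballI)
    fix i :: 'y assume "i \<in> Basis"
    show "(\<lambda>\<xi>. G \<xi> \<bullet> i) \<in> borel_measurable M"
    proof (rule borel_measurable_LIMSEQ_metric)
      show "(\<lambda>\<xi>. real (Suc n) *\<^sub>R (phi (u \<xi>) (y + inverse (real (Suc n)) *\<^sub>R i) \<xi> - phi (u \<xi>) y \<xi>)) \<in> borel_measurable M" for n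
        by (intro borel_measurable_scaleR borel_measurable_const borel_measurable_diff phi_comp_meas um)
      fix \<xi> assume \<xi>: "\<xi> \<in> space M"
      show "(\<lambda>n. real (Suc n) *\<^sub>R (phi (u \<xi>) (y + inverse (real (Suc n)) *\<^sub>R i) \<xi> - phi (u \<xi>) y \<xi>)) \<longlonglongrightarrow> G \<xi> \<bullet> i"
        unfolding G_def by (rule deriv_seq[OF der[OF \<xi>]])
    qed
  qed
  have Gb: "norm (G \<xi>) \<le> lphi" if "\<xi> \<in> space M" for \<xi>
    unfolding G_def by (rule lip_grad_bound[OF phi_diff_y[OF that] phi_lipschitz_y[OF that]])
  show Gi: "integrable M (\<lambda>\<xi>. grad (\<lambda>y'. phi (u \<xi>) y' \<xi>) y)"
    unfolding G_def[symmetric] using Gm Gb by (intro integrable_const_bound[where B=lphi]) auto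
  show "((\<lambda>y'. \<integral>\<xi>. phi (u \<xi>) y' \<xi> \<partial>M) has_derivative
          (\<lambda>k. inner (\<integral>\<xi>. grad (\<lambda>y'. phi (u \<xi>) y' \<xi>) y \<partial>M) k)) (at y)"
    unfolding G_def[symmetric]
  proof (rule quad_has_derivative[where C="Lphi / 2"])
    fix k
    have "inner (\<integral>\<xi>. G \<xi> \<partial>M) k = (\<integral>\<xi>. inner (G \<xi>) k \<partial>M)"
      using Gi unfolding G_def[symmetric] by simp
    then have "(\<integral>\<xi>. phi (u \<xi>) (y + k) \<xi> \<partial>M) - (\<integral>\<xi>. phi (u \<xi>) y \<xi> \<partial>M) - inner (\<integral>\<xi>. G \<xi> \<partial>M) k
        = (\<integral>\<xi>. phi (u \<xi>) (y + k) \<xi> - phi (u \<xi>) y \<xi> - inner (G \<xi>) k \<partial>M)"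
      using ui Gi unfolding G_def[symmetric] by simp
    also have "\<bar>\<dots>\<bar> \<le> Lphi / 2 * (norm k)\<^sup>2"
    proof (rule abs_int_le)
      show "integrable M (\<lambda>\<xi>. phi (u \<xi>) (y + k) \<xi> - phi (u \<xi>) y \<xi> - inner (G \<xi>) k)"
        using ui Gi unfolding G_def[symmetric] by (intro Bochner_Integration.integrable_diff integrable_inner_left) auto
      fix \<xi> assume \<xi>: "\<xi> \<in> space M"
      show "\<bar>phi (u \<xi>) (y + k) \<xi> - phi (u \<xi>) y \<xi> - inner (G \<xi>) k\<bar> \<le> Lphi / 2 * (norm k)\<^sup>2"
        using descent[OF der[OF \<xi>] grad_y_lip[OF \<xi>], where a=y and b="y + k"] unfolding G_def by simp
    qed
    finally show "\<bar>(\<integral>\<xi>. phi (u \<xi>) (y + k) \<xi> \<partial>M) - (\<integral>\<xi>. phi (u \<xi>) y \<xi> \<partial>M) - inner (\<integral>\<xi>. G \<xi> \<partial>M) k\<bar> \<le> Lphi / 2 * (norm k)\<^sup>2" .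
  qed
qed

lemma claim1:
  fixes x :: 'x and y :: 'y
  assumes r: "rho < r" and xX: "x \<in> X"
  defines "g \<equiv> grad (dlam M lam r X phi h c y) x"
  defines "delta \<equiv> rho * diameter X / r * norm g + lphi * lh * lc * sqrt dh / r * norm g
                     + (rho / (2 * r\<^sup>2) + 1 / r) * (norm g)\<^sup>2 + lam * lphi * lh\<^sup>2 * sqrt dh"
  shows "dlam M lam r X phi h c y differentiable (at x)"
    and "g \<in> wsubdiff rho delta (\<lambda>x'. ereal (F x' y) + iota X x') x"
proof -
  define a where "a = xh y x"
  have aX: "a \<in> X" unfolding a_def by (rule xh_in)
  have hd: "(dlam M lam r X phi h c y has_derivative (\<lambda>k. inner (r *\<^sub>R (x - a)) k)) (at x)"
    unfolding a_def by (rule d_deriv[OF r])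
  then show "dlam M lam r X phi h c y differentiable (at x)" unfolding differentiable_def by blast
  have gq: "g = r *\<^sub>R (x - a)" unfolding g_def by (rule grad_unique[OF hd])
  have r0: "0 < r" using r rho_nn by simp
  define n where "n = norm (x - a)"
  have n0: "0 \<le> n" unfolding n_def by simp
  have ng: "norm g = r * n" unfolding gq n_def using r0 by simp
  define Dm where "Dm = diameter X"
  define K where "K = lphi * lh * lc * sqrt dh"
  define L0 where "L0 = lphi * (sqrt dh * (lam * lh\<^sup>2 / 2))"
  have L0le: "L0 \<le> lam * lphi * lh\<^sup>2 * sqrt dh"
    unfolding L0_def using lam_pos lphi_nn dh_pos by (simp add: field_simps)
  have deq: "delta = rho * Dm * n + K * n + rho / 2 * n\<^sup>2 + r * n\<^sup>2 + lam * lphi * lh\<^sup>2 * sqrt dh"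
    unfolding delta_def ng Dm_def K_def using r0 by (simp add: field_simps power2_eq_square)
  have main: "F x y + inner g (x' - x) - rho / 2 * (norm (x' - x))\<^sup>2 - delta \<le> F x' y" if x': "x' \<in> X" for x'
  proof -
    have s: "Phi y x a + (r - rho) / 2 * (norm (x' - a))\<^sup>2 \<le> Phi y x x'"
      unfolding a_def by (rule strong[OF r x'])
    have idt: "r / 2 * (norm (a - x))\<^sup>2 - r / 2 * (norm (x' - x))\<^sup>2 + r / 2 * (norm (x' - a))\<^sup>2 = inner g (x' - a)"
      unfolding gq by (simp add: power2_norm_eq_inner inner_diff_left inner_diff_right inner_commute algebra_simps)
    have f1: "Fl a y + inner g (x' - a) - rho / 2 * (norm (x' - a))\<^sup>2 \<le> Fl x' y"
    proof -
      have s2: "Fl a y + r / 2 * (norm (a - x))\<^sup>2 + (r - rho) / 2 * (norm (x' - a))\<^sup>2 \<le> Fl x' y + r / 2 * (norm (x' - x))\<^sup>2"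
        using s by (simp only: Phi_def)
      have e: "(r - rho) / 2 * (norm (x' - a))\<^sup>2 = r / 2 * (norm (x' - a))\<^sup>2 - rho / 2 * (norm (x' - a))\<^sup>2"
        by (simp only: diff_divide_distrib left_diff_distrib)
      show ?thesis using s2 idt e by linarith
    qed
    have f2: "Fl x' y \<le> F x' y" by (rule Fl_le_F)
    have f3: "F a y - L0 \<le> Fl a y" unfolding L0_def by (rule F_le_Fl)
    have f4: "F x y - K * n \<le> F a y" using F_lip[of x y a] unfolding K_def n_def by (simp add: abs_le_iff)
    have f5: "inner g (x' - a) = inner g (x' - x) + r * n\<^sup>2"
    proof -
      have "inner g (x' - a) = inner g (x' - x) + inner g (x - a)" by (simp add: inner_diff_right)
      moreover have "inner g (x - a) = r * n\<^sup>2" unfolding gq n_def by (simp add: power2_norm_eq_inner)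
      ultimately show ?thesis by simp
    qed
    have f6: "(norm (x' - a))\<^sup>2 \<le> (norm (x' - x))\<^sup>2 + 2 * (Dm * n) + n\<^sup>2"
    proof -
      have "(norm (x' - a))\<^sup>2 = (norm (x' - x))\<^sup>2 + 2 * inner (x' - x) (x - a) + (norm (x - a))\<^sup>2"
      proof -
        have "x' - a = (x' - x) + (x - a)" by simp
        then show ?thesis by (simp only: power2_norm_eq_inner inner_add_left inner_add_right inner_commute[of "x - a" "x' - x"])
      qed
      moreover have "inner (x' - x) (x - a) \<le> norm (x' - x) * n" unfolding n_def by (rule Cauchy_Schwarz_ineq2[THEN order_trans[OF abs_ge_self]])
      moreover have "norm (x' - x) \<le> Dm"
        using diameter_bounded_bound[OF compact_imp_bounded[OF Xcpt] x' xX] unfolding Dm_def by (simp add: dist_norm)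
      then have "norm (x' - x) * n \<le> Dm * n" using n0 by (rule mult_right_mono)
      ultimately show ?thesis unfolding n_def by linarith
    qed
    have f7: "rho / 2 * (norm (x' - a))\<^sup>2 \<le> rho / 2 * (norm (x' - x))\<^sup>2 + rho * Dm * n + rho / 2 * n\<^sup>2"
    proof -
      have "rho / 2 * (norm (x' - a))\<^sup>2 \<le> rho / 2 * ((norm (x' - x))\<^sup>2 + 2 * (Dm * n) + n\<^sup>2)"
        using f6 rho_nn by (intro mult_left_mono) auto
      then show ?thesis by (simp add: algebra_simps)
    qed
    have rn: "0 \<le> r * n\<^sup>2" using r0 by simp
    show ?thesis unfolding deq using f1 f2 f3 f4 f5 f7 L0le rn by linarith
  qed
  show "g \<in> wsubdiff rho delta (\<lambda>x'. ereal (F x' y) + iota X x') x"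
    unfolding wsubdiff_def
  proof (intro CollectI allI)
    fix x'
    show "ereal (F x y) + iota X x + ereal (inner g (x' - x) - rho / 2 * (norm (x' - x))\<^sup>2 - delta) \<le> ereal (F x' y) + iota X x'"
    proof (cases "x' \<in> X")
      case True
      then show ?thesis using main[OF True] xX by (simp add: iota_def)
    next
      case False
      then show ?thesis by (simp add: iota_def)
    qed
  qed
qed

end


context setting begin

lemma claim2:
  fixes x :: 'x and y :: 'y
  shows "(\<lambda>y'. F x y') differentiable (at y)" and "(\<lambda>y'. Fl x y') differentiable (at y)"
   and "(infdist 0 ((\<lambda>v. - grad (\<lambda>y'. F x y') y + v) ` normal_cone Y y))\<^sup>2
          \<le> 2 * (infdist 0 ((\<lambda>v. - grad (\<lambda>y'. Fl x y') y + v) ` normal_cone Y y))\<^sup>2 + lam\<^sup>2 * dh * Lphi\<^sup>2 * lh ^ 4 / 2"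
proof -
  define GV where "GV \<xi> = grad (\<lambda>y'. phi (V x \<xi>) y' \<xi>) y" for \<xi>
  define GU where "GU \<xi> = grad (\<lambda>y'. phi (U x \<xi>) y' \<xi>) y" for \<xi>
  have FV: "(\<lambda>y'. F x y') = (\<lambda>y'. \<integral>\<xi>. phi (V x \<xi>) y' \<xi> \<partial>M)" by (rule ext) (rule F_eq)
  have FU: "(\<lambda>y'. Fl x y') = (\<lambda>y'. \<integral>\<xi>. phi (U x \<xi>) y' \<xi> \<partial>M)" by (rule ext) (rule Fl_eq)
  have iV: "integrable M GV" unfolding GV_def by (rule ygrad(1)[OF V_meas V_int])
  have iU: "integrable M GU" unfolding GU_def by (rule ygrad(1)[OF U_meas U_int])
  have dV: "((\<lambda>y'. F x y') has_derivative (\<lambda>k. inner (\<integral>\<xi>. GV \<xi> \<partial>M) k)) (at y)"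
    unfolding FV GV_def by (rule ygrad(2)[OF V_meas V_int])
  have dU: "((\<lambda>y'. Fl x y') has_derivative (\<lambda>k. inner (\<integral>\<xi>. GU \<xi> \<partial>M) k)) (at y)"
    unfolding FU GU_def by (rule ygrad(2)[OF U_meas U_int])
  show "(\<lambda>y'. F x y') differentiable (at y)" using dV unfolding differentiable_def by blast
  show "(\<lambda>y'. Fl x y') differentiable (at y)" using dU unfolding differentiable_def by blast
  have gV: "grad (\<lambda>y'. F x y') y = (\<integral>\<xi>. GV \<xi> \<partial>M)" by (rule grad_unique[OF dV])
  have gU: "grad (\<lambda>y'. Fl x y') y = (\<integral>\<xi>. GU \<xi> \<partial>M)" by (rule grad_unique[OF dU])
  define eps where "eps = Lphi * (sqrt dh * (lam * lh\<^sup>2 / 2))"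
  have eps0: "0 \<le> eps" unfolding eps_def using Lphi_nn dh_pos lam_pos by simp
  have pt: "norm (GV \<xi> - GU \<xi>) \<le> eps" if \<xi>: "\<xi> \<in> space M" for \<xi>
  proof -
    have "norm (GV \<xi> - GU \<xi>) \<le> Lphi * norm (V x \<xi> - U x \<xi>)" unfolding GV_def GU_def by (rule grad_y_lip_u[OF \<xi>])
    also have "\<dots> \<le> eps" unfolding eps_def V_def U_def by (rule mult_left_mono[OF hv_hl_diff Lphi_nn])
    finally show ?thesis .
  qed
  have "norm ((\<integral>\<xi>. GV \<xi> \<partial>M) - (\<integral>\<xi>. GU \<xi> \<partial>M)) = norm (\<integral>\<xi>. GV \<xi> - GU \<xi> \<partial>M)"
    using iV iU by simp
  also have "\<dots> \<le> (\<integral>\<xi>. norm (GV \<xi> - GU \<xi>) \<partial>M)" by (rule integral_norm_bound)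
  also have "\<dots> \<le> (\<integral>\<xi>. eps \<partial>M)" using pt iV iU by (intro integral_mono) auto
  also have "\<dots> = eps" using prob_space by simp
  finally have dif: "norm (grad (\<lambda>y'. F x y') y - grad (\<lambda>y'. Fl x y') y) \<le> eps" unfolding gV gU .
  define A where "A = - grad (\<lambda>y'. F x y') y"
  define B where "B = - grad (\<lambda>y'. Fl x y') y"
  have AB: "norm (A - B) \<le> eps" unfolding A_def B_def using dif by (simp add: norm_minus_commute)
  define N where "N = normal_cone Y y"
  have N0: "0 \<in> N" unfolding N_def normal_cone_def by simp
  have le: "infdist 0 ((\<lambda>v. A + v) ` N) - eps \<le> infdist 0 ((\<lambda>v. B + v) ` N)"
  proof -
    have ne: "(\<lambda>v. B + v) ` N \<noteq> {}" using N0 by blast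
    have "infdist 0 ((\<lambda>v. A + v) ` N) - eps \<le> (INF b\<in>(\<lambda>v. B + v) ` N. dist 0 b)"
    proof (rule cINF_greatest[OF ne])
      fix b assume "b \<in> (\<lambda>v. B + v) ` N"
      then obtain v where v: "v \<in> N" "b = B + v" by blast
      have "infdist 0 ((\<lambda>v. A + v) ` N) \<le> dist 0 (A + v)" using v by (intro infdist_le) auto
      also have "dist 0 (A + v) \<le> dist 0 (B + v) + norm (A - B)"
      proof -
        have "A + v = (B + v) + (A - B)" by simp
        then have "norm (A + v) \<le> norm (B + v) + norm (A - B)" using norm_triangle_ineq[of "B + v" "A - B"] by (simp only:)
        then show ?thesis by (simp only: dist_0_norm)
      qed
      finally show "infdist 0 ((\<lambda>v. A + v) ` N) - eps \<le> dist 0 b" using v AB by simp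
    qed
    then show ?thesis using ne by (simp add: infdist_def)
  qed
  define p where "p = infdist 0 ((\<lambda>v. A + v) ` N)"
  define q where "q = infdist 0 ((\<lambda>v. B + v) ` N)"
  have p0: "0 \<le> p" unfolding p_def by (rule infdist_nonneg)
  have q0: "0 \<le> q" unfolding q_def by (rule infdist_nonneg)
  have "p \<le> q + eps" using le unfolding p_def q_def by simp
  then have "p\<^sup>2 \<le> (q + eps)\<^sup>2" using p0 by (intro power_mono) auto
  also have "\<dots> \<le> 2 * q\<^sup>2 + 2 * eps\<^sup>2"
  proof -
    have "0 \<le> (q - eps)\<^sup>2" by simp
    then show ?thesis by (simp add: power2_eq_square algebra_simps)
  qed
  also have "2 * eps\<^sup>2 = lam\<^sup>2 * dh * Lphi\<^sup>2 * lh ^ 4 / 2"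
    unfolding eps_def using dh_pos by (simp add: power_mult_distrib field_simps)
  finally show "(infdist 0 ((\<lambda>v. - grad (\<lambda>y'. F x y') y + v) ` normal_cone Y y))\<^sup>2
          \<le> 2 * (infdist 0 ((\<lambda>v. - grad (\<lambda>y'. Fl x y') y + v) ` normal_cone Y y))\<^sup>2 + lam\<^sup>2 * dh * Lphi\<^sup>2 * lh ^ 4 / 2"
    unfolding p_def q_def A_def B_def N_def .
qed

lemma claim1b:
  fixes x :: 'x and y :: 'y
  assumes r: "rho < r" and xX: "x \<in> X"
  defines "g \<equiv> grad (dlam M lam r X phi h c y) x"
  defines "delta \<equiv> rho * diameter X / r * norm g + lphi * lh * lc * sqrt dh / r * norm g
                     + (rho / (2 * r\<^sup>2) + 1 / r) * (norm g)\<^sup>2 + lam * lphi * lh\<^sup>2 * sqrt dh"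
  shows "wsubdiff rho delta (\<lambda>x'. ereal (F x' y) + iota X x') x \<noteq> {}"
    and "(infdist 0 (wsubdiff rho delta (\<lambda>x'. ereal (F x' y) + iota X x') x))\<^sup>2 \<le> (norm g)\<^sup>2"
proof -
  have gS: "g \<in> wsubdiff rho delta (\<lambda>x'. ereal (F x' y) + iota X x') x"
    unfolding g_def delta_def by (rule claim1(2)[OF r xX])
  then show "wsubdiff rho delta (\<lambda>x'. ereal (F x' y) + iota X x') x \<noteq> {}" by blast
  have "infdist 0 (wsubdiff rho delta (\<lambda>x'. ereal (F x' y) + iota X x') x) \<le> dist 0 g"
    by (rule infdist_le[OF gS])
  then show "(infdist 0 (wsubdiff rho delta (\<lambda>x'. ereal (F x' y) + iota X x') x))\<^sup>2 \<le> (norm g)\<^sup>2"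
    by (intro power_mono) (auto simp: infdist_nonneg)
qed

end

theorem lemmaB6:
  fixes M :: "'xi measure"
    and X :: "'x::euclidean_space set" and Y :: "'y::euclidean_space set"
    and c :: "'x \<Rightarrow> 'xi \<Rightarrow> 'c::euclidean_space"
    and h :: "'h::finite \<Rightarrow> 'c \<Rightarrow> real"
    and phi :: "real^'h \<Rightarrow> 'y \<Rightarrow> 'xi \<Rightarrow> real"
    and lc lh lphi Lc Lphi lam r :: real
  assumes P: "prob_space M"
    and Xne: "X \<noteq> {}" and Xcl: "closed X" and Xcvx: "convex X" and Xcpt: "compact X"
    and Yne: "Y \<noteq> {}" and Ycl: "closed Y" and Ycvx: "convex Y" and Ycpt: "compact Y"
    and c_meas: "\<And>x. (\<lambda>\<xi>. c x \<xi>) \<in> borel_measurable M"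
    and phi_meas: "\<And>u y. (\<lambda>\<xi>. phi u y \<xi>) \<in> borel_measurable M"
    and f_int: "\<And>x y. integrable M (\<lambda>\<xi>. phi (hvec h (c x \<xi>)) y \<xi>)"
    and c_diff: "\<And>x \<xi>. \<xi> \<in> space M \<Longrightarrow> (\<lambda>x. c x \<xi>) differentiable (at x)"
    and phi_diff: "\<And>p \<xi>. \<xi> \<in> space M \<Longrightarrow> (\<lambda>(u, y). phi u y \<xi>) differentiable (at p)"
    and c_lip: "\<And>\<xi>. \<xi> \<in> space M \<Longrightarrow> lc-lipschitz_on UNIV (\<lambda>x. c x \<xi>)"
    and h_cvx: "\<And>j. convex_on UNIV (h j)"
    and h_lip: "\<And>j. lh-lipschitz_on UNIV (h j)"
    and phi_mono: "\<And>u1 u2 y \<xi>. \<xi> \<in> space M \<Longrightarrow> (\<forall>j. u1 $ j \<le> u2 $ j) \<Longrightarrow> phi u1 y \<xi> \<le> phi u2 y \<xi>"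
    and phi_lip: "\<And>\<xi>. \<xi> \<in> space M \<Longrightarrow> lphi-lipschitz_on UNIV (\<lambda>(u, y). phi u y \<xi>)"
    and Lc_nn: "0 \<le> Lc" and Lphi_nn: "0 \<le> Lphi"
    and Dc_lip: "\<And>x1 x2. (\<integral>\<^sup>+ \<xi>. ennreal ((onorm (\<lambda>v. frechet_derivative (\<lambda>x. c x \<xi>) (at x1) v
                                   - frechet_derivative (\<lambda>x. c x \<xi>) (at x2) v))\<^sup>2) \<partial>M)
                 \<le> ennreal (Lc\<^sup>2 * (norm (x1 - x2))\<^sup>2)"
    and D1phi_lip: "\<And>u1 u2 y1 y2 \<xi>. \<xi> \<in> space M \<Longrightarrow>
          (norm (grad (\<lambda>u. phi u y1 \<xi>) u1 - grad (\<lambda>u. phi u y2 \<xi>) u2))\<^sup>2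
            \<le> Lphi\<^sup>2 * ((norm (u1 - u2))\<^sup>2 + (norm (y1 - y2))\<^sup>2)"
    and Dyphi_lip: "\<And>u1 u2 y1 y2 \<xi>. \<xi> \<in> space M \<Longrightarrow>
          (norm (grad (\<lambda>y. phi u1 y \<xi>) y1 - grad (\<lambda>y. phi u2 y \<xi>) y2))\<^sup>2
            \<le> Lphi\<^sup>2 * ((norm (u1 - u2))\<^sup>2 + (norm (y1 - y2))\<^sup>2)"
    and lam_pos: "0 < lam"
    and r_gt: "r > real CARD('h) * Lphi * lh\<^sup>2 * lc\<^sup>2 + Lc * lphi * lh * sqrt (real CARD('h))"
    and xX: "x \<in> X" and yY: "y \<in> Y"
  shows "let dh = real CARD('h);
             rho = dh * Lphi * lh\<^sup>2 * lc\<^sup>2 + Lc * lphi * lh * sqrt dh;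
             F = Fobj M phi h c;
             Fl = Flam M lam phi h c;
             d = dlam M lam r X phi h c y;
             g = grad d x;
             delta = rho * diameter X / r * norm g + lphi * lh * lc * sqrt dh / r * norm g
                     + (rho / (2 * r\<^sup>2) + 1 / r) * (norm g)\<^sup>2 + lam * lphi * lh\<^sup>2 * sqrt dh;
             S = wsubdiff rho delta (\<lambda>x'. ereal (F x' y) + iota X x') x
         in d differentiable (at x)
            \<and> (\<lambda>y'. F x y') differentiable (at y)
            \<and> (\<lambda>y'. Fl x y') differentiable (at y)
            \<and> S \<noteq> {}
            \<and> (infdist 0 S)\<^sup>2 \<le> (norm g)\<^sup>2
            \<and> (infdist 0 ((\<lambda>v. - grad (\<lambda>y'. F x y') y + v) ` normal_cone Y y))\<^sup>2
                \<le> 2 * (infdist 0 ((\<lambda>v. - grad (\<lambda>y'. Fl x y') y + v) ` normal_cone Y y))\<^sup>2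
                  + lam\<^sup>2 * dh * Lphi\<^sup>2 * lh ^ 4 / 2"
proof -
  have st: "setting M c lc Lc X h phi lh lphi Lphi lam"
    by (intro setting.intro cset.intro cset_axioms.intro setting_axioms.intro P) (fact assms)+
  interpret S: setting M c lc Lc X Y h phi lh lphi Lphi lam r by (fact st)
  have rho: "S.rho < r" using r_gt unfolding S.rho_def S.dh_def .
  note c1 = S.claim1[OF rho xX, of y]
  note c1b = S.claim1b[OF rho xX, of y]
  note c2 = S.claim2[of x y]
  show ?thesis using c1 c1b c2 unfolding Let_def S.rho_def S.dh_def S.F_def S.Fl_def by blast
qed

end
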